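(* In every execution of Algorithm BLOCK (defined in the context) on the Filling problem for a connected graph $G$ in the ASYNC model, there is at most one robot in state Leader at any time.
   Context: Filling problem (single Door). Let $G$ be a finite connected graph with $n$ vertices, a priori unknown to the robots, whose maximum degree is at most $\Delta$, where $\Delta$ is known to the robots. One vertex, the Door, is designated and has degree $1$. For every vertex its neighbours are arranged in a fixed cyclic order, visible to a robot located at that vertex. Robots are placed one by one at the Door: whenever the Door is unoccupied, a new robot is immediately placed there. Robots move along edges. The goal is that no two robots are ever at the same vertex and eventually every vertex is occupied by exactly one robot and all robots have terminated. Robots are anonymous, identical, autonomous and cannot communicate directly; each carries a light showing one of a finite set of colors (the light being off counts as a color), visible to robots within their visibility range. A robot with visibility range $h$ hops sees the vertices within graph distance $h$, the robots on them and their lights. Robots act in Look–Compute–Move cycles. In the ASYNC model robots are activated independently after finite but arbitrarily long delays and each phase has finite but arbitrary duration. Algorithm BLOCK (visibility $2$ hops). States: None, Follower, Leader, Finished. Colors: $\Delta$ direction colors (DIR), one per possible neighbour index, where one distinguished direction value "$\Delta$" means "I am stuck"; CONF; CONF2; MOV; off. An unoccupied vertex is blocked (for a Leader) if it is adjacent to some other robot whose light is on and does not show the special color $\Delta$. A robot placed at the Door is in state None: if its unique neighbour is unoccupied it becomes Leader and moves there (showing MOV); otherwise it becomes a Follower, with the neighbouring robot as its predecessor (it is that robot's successor). Leader: it chooses as target an unoccupied, unblocked neighbour, shows the corresponding DIR color, waits until its successor (if any) shows CONF (or CONF2), and then, if the target is still unoccupied, sets MOV and moves there; if the target has become occupied it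 chooses a new unoccupied unblocked target. If the Leader has no unoccupied unblocked neighbour, it shows the special color $\Delta$; its successor confirms; the old Leader turns its light off and becomes Finished, and the successor becomes the new Leader. Follower: when its predecessor shows a direction, it records it and shows CONF; when the vertex its predecessor occupied becomes unoccupied, it shows the DIR color of that vertex, waits until its successor (if any) shows CONF, then sets MOV, moves there; if the predecessor changes its shown direction, it records it and shows CONF2. Moving robots show MOV while moving. *)

theory Defs
  imports Main
begin

text \<open>A graph is given by a vertex set V and, for every vertex u, the list
  ports u of its neighbours in their fixed (cyclic) order; port k of u is
  ports u ! k (0-based).\<close>

definition edges :: "('v \<Rightarrow> 'v list) \<Rightarrow> 'v set \<Rightarrow> ('v \<times> 'v) set" where
  "edges ports V = {(u, w). u \<in> V \<and> w \<in> set (ports u)}"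

definition port_graph :: "'v set \<Rightarrow> ('v \<Rightarrow> 'v list) \<Rightarrow> 'v \<Rightarrow> nat \<Rightarrow> bool" where
  "port_graph V ports door Delta \<longleftrightarrow>
     finite V \<and> door \<in> V \<and>
     (\<forall>u\<in>V. distinct (ports u) \<and> set (ports u) \<subseteq> V \<and> u \<notin> set (ports u)
            \<and> length (ports u) \<le> Delta) \<and>
     (\<forall>u\<in>V. \<forall>w\<in>set (ports u). u \<in> set (ports w)) \<and>
     (\<forall>u\<in>V. \<forall>w\<in>V. (u, w) \<in> (edges ports V)\<^sup>*) \<and>
     length (ports door) = 1"

definition port_of :: "('v \<Rightarrow> 'v list) \<Rightarrow> 'v \<Rightarrow> 'v \<Rightarrow> nat" where
  "port_of ports w u = (THE j. j < length (ports w) \<and> ports w ! j = u)"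

definition within2 :: "('v \<Rightarrow> 'v list) \<Rightarrow> 'v \<Rightarrow> 'v \<Rightarrow> bool" where
  "within2 ports u v \<longleftrightarrow> v = u \<or> v \<in> set (ports u) \<or> (\<exists>w\<in>set (ports u). v \<in> set (ports w))"

datatype rstate = SNone | Follower | Leader | Finished

text \<open>Lights: Off, a direction colour Dir k (port index k), the special
  direction value Delta ("I am stuck") written DStuck, CONF, CONF2, MOV.\<close>
datatype color = Off | Dir nat | DStuck | Conf | Conf2 | Mov

text \<open>Local state of a robot: position, algorithm state, light, port towards
  its predecessor, port towards its successor, and the recorded direction of
  its predecessor (Off = nothing recorded at the current vertex).\<close>
record 'v robot =
  pos :: 'v
  st  :: rstate
  col :: color
  pp  :: "nat option"
  sp  :: "nat option"
  rcd :: color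

text \<open>A snapshot maps each vertex to the set of lights of robots on it
  (empty = unoccupied); vertices beyond 2 hops are seen as empty.\<close>
type_synonym 'v snapshot = "'v \<Rightarrow> color set"

datatype 'v phase = Idle | Looked "'v snapshot" | Moving nat

record 'v config =
  nr  :: nat
  rob :: "nat \<Rightarrow> 'v robot"
  ph  :: "nat \<Rightarrow> 'v phase"

definition new_robot :: "'v \<Rightarrow> 'v robot" where
  "new_robot door = \<lparr>pos = door, st = SNone, col = Off, pp = None, sp = None, rcd = Off\<rparr>"

definition init_config :: "'v \<Rightarrow> 'v config" where
  "init_config door = \<lparr>nr = 1, rob = (\<lambda>_. new_robot door), ph = (\<lambda>_. Idle)\<rparr>"

definition lights_at :: "'v config \<Rightarrow> 'v \<Rightarrow> color set" where
  "lights_at c v = {col (rob c i) | i. i < nr c \<and> pos (rob c i) = v}"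

definition view :: "('v \<Rightarrow> 'v list) \<Rightarrow> 'v config \<Rightarrow> 'v \<Rightarrow> 'v snapshot" where
  "view ports c u = (\<lambda>v. if within2 ports u v then lights_at c v else {})"

definition is_dir :: "color \<Rightarrow> bool" where
  "is_dir x \<longleftrightarrow> (\<exists>k. x = Dir k) \<or> x = DStuck"

text \<open>Unoccupied, unblocked neighbour (port k) of a robot at u: a vertex is
  blocked if adjacent to some other robot whose light is on and not DStuck.\<close>
definition free_port :: "('v \<Rightarrow> 'v list) \<Rightarrow> 'v snapshot \<Rightarrow> 'v \<Rightarrow> nat \<Rightarrow> bool" where
  "free_port ports S u k \<longleftrightarrow> k < length (ports u) \<and> S (ports u ! k) = {} \<and>
     (\<forall>w\<in>set (ports (ports u ! k)). w \<noteq> u \<longrightarrow> (\<forall>x\<in>S w. x = Off \<or> x = DStuck))"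

definition succ_confirmed :: "('v \<Rightarrow> 'v list) \<Rightarrow> 'v snapshot \<Rightarrow> 'v robot \<Rightarrow> bool" where
  "succ_confirmed ports S r \<longleftrightarrow>
     (case sp r of None \<Rightarrow> True
      | Some j \<Rightarrow> S (ports (pos r) ! j) \<inter> {Conf, Conf2} \<noteq> {})"

text \<open>block_rule ports S r r' mv: from snapshot S, a robot with local state r
  may switch to local state r' and then move through port mv (None = stay).\<close>
inductive block_rule :: "('v \<Rightarrow> 'v list) \<Rightarrow> 'v snapshot \<Rightarrow> 'v robot \<Rightarrow> 'v robot \<Rightarrow> nat option \<Rightarrow> bool"
  for ports :: "'v \<Rightarrow> 'v list" where
  none_leader:
    "\<lbrakk>st r = SNone; S (ports (pos r) ! 0) = {}\<rbrakk>
     \<Longrightarrow> block_rule ports S r (r\<lparr>st := Leader, col := Mov\<rparr>) (Some 0)"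
| none_follower:
    "\<lbrakk>st r = SNone; S (ports (pos r) ! 0) \<noteq> {}\<rbrakk>
     \<Longrightarrow> block_rule ports S r (r\<lparr>st := Follower, col := Off, pp := Some 0, rcd := Off\<rparr>) None"
| leader_choose:
    "\<lbrakk>st r = Leader; \<not> is_dir (col r); free_port ports S (pos r) k\<rbrakk>
     \<Longrightarrow> block_rule ports S r (r\<lparr>col := Dir k\<rparr>) None"
| leader_stuck:
    "\<lbrakk>st r = Leader; \<not> is_dir (col r); \<forall>k. \<not> free_port ports S (pos r) k\<rbrakk>
     \<Longrightarrow> block_rule ports S r (r\<lparr>col := DStuck\<rparr>) None"
| leader_move:
    "\<lbrakk>st r = Leader; col r = Dir k; succ_confirmed ports S r; S (ports (pos r) ! k) = {}\<rbrakk>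
     \<Longrightarrow> block_rule ports S r (r\<lparr>col := Mov\<rparr>) (Some k)"
| leader_rechoose:
    "\<lbrakk>st r = Leader; col r = Dir k; S (ports (pos r) ! k) \<noteq> {}; free_port ports S (pos r) k'\<rbrakk>
     \<Longrightarrow> block_rule ports S r (r\<lparr>col := Dir k'\<rparr>) None"
| leader_restuck:
    "\<lbrakk>st r = Leader; col r = Dir k; S (ports (pos r) ! k) \<noteq> {}; \<forall>k'. \<not> free_port ports S (pos r) k'\<rbrakk>
     \<Longrightarrow> block_rule ports S r (r\<lparr>col := DStuck\<rparr>) None"
| leader_finish:
    "\<lbrakk>st r = Leader; col r = DStuck; succ_confirmed ports S r\<rbrakk>
     \<Longrightarrow> block_rule ports S r (r\<lparr>st := Finished, col := Off\<rparr>) None"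
| follower_record:
    "\<lbrakk>st r = Follower; pp r = Some j; x \<in> S (ports (pos r) ! j); is_dir x; x \<noteq> rcd r\<rbrakk>
     \<Longrightarrow> block_rule ports S r
           (r\<lparr>rcd := x, col := (if is_dir (rcd r) then Conf2 else Conf)\<rparr>) None"
| follower_show:
    "\<lbrakk>st r = Follower; pp r = Some j; S (ports (pos r) ! j) = {}; rcd r = Dir d; col r \<noteq> Dir j\<rbrakk>
     \<Longrightarrow> block_rule ports S r (r\<lparr>col := Dir j\<rparr>) None"
| follower_move:
    "\<lbrakk>st r = Follower; pp r = Some j; S (ports (pos r) ! j) = {}; rcd r = Dir d; col r = Dir j;
      succ_confirmed ports S r\<rbrakk>
     \<Longrightarrow> block_rule ports S r (r\<lparr>col := Mov\<rparr>) (Some j)"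
| follower_promote:
    "\<lbrakk>st r = Follower; pp r = Some j; rcd r = DStuck; Off \<in> S (ports (pos r) ! j)\<rbrakk>
     \<Longrightarrow> block_rule ports S r (r\<lparr>st := Leader\<rparr>) None"

definition compute :: "('v \<Rightarrow> 'v list) \<Rightarrow> 'v snapshot \<Rightarrow> 'v robot \<Rightarrow> 'v robot \<Rightarrow> nat option \<Rightarrow> bool" where
  "compute ports S r r' mv \<longleftrightarrow>
     block_rule ports S r r' mv \<or>
     ((\<nexists>r'' mv'. block_rule ports S r r'' mv') \<and> r' = r \<and> mv = None)"

text \<open>Arrival after moving through port k: the successor is behind (the
  vertex just left); a Follower's predecessor is in its recorded direction.\<close>
definition arrive :: "('v \<Rightarrow> 'v list) \<Rightarrow> 'v robot \<Rightarrow> nat \<Rightarrow> 'v robot" where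
  "arrive ports r k =
     (let u = pos r; w = ports u ! k in
      r\<lparr>pos := w, sp := Some (port_of ports w u),
        pp := (case rcd r of Dir d \<Rightarrow> if st r = Follower then Some d else pp r | _ \<Rightarrow> pp r),
        rcd := Off\<rparr>)"

text \<open>One atomic event of an ASYNC execution: a Look (instantaneous
  snapshot), the end of a Compute (new state and light become visible), the
  end of a Move (robot arrives at the neighbour; if it left the Door a new
  robot is immediately placed there).  Arbitrary interleavings of these
  events model arbitrary finite activation delays and phase durations.\<close>
inductive astep :: "('v \<Rightarrow> 'v list) \<Rightarrow> 'v \<Rightarrow> 'v config \<Rightarrow> 'v config \<Rightarrow> bool"
  for ports :: "'v \<Rightarrow> 'v list" and door :: 'v where
  look:
    "\<lbrakk>i < nr c; ph c i = Idle\<rbrakk>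
     \<Longrightarrow> astep ports door c (c\<lparr>ph := (ph c)(i := Looked (view ports c (pos (rob c i))))\<rparr>)"
| comp:
    "\<lbrakk>i < nr c; ph c i = Looked S; compute ports S (rob c i) r' mv\<rbrakk>
     \<Longrightarrow> astep ports door c (c\<lparr>rob := (rob c)(i := r'),
                              ph := (ph c)(i := (case mv of None \<Rightarrow> Idle | Some k \<Rightarrow> Moving k))\<rparr>)"
| move:
    "\<lbrakk>i < nr c; ph c i = Moving k; pos (rob c i) \<noteq> door\<rbrakk>
     \<Longrightarrow> astep ports door c (c\<lparr>rob := (rob c)(i := arrive ports (rob c i) k),
                              ph := (ph c)(i := Idle)\<rparr>)"
| move_door:
    "\<lbrakk>i < nr c; ph c i = Moving k; pos (rob c i) = door\<rbrakk>
     \<Longrightarrow> astep ports door c (c\<lparr>nr := Suc (nr c),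
                              rob := (rob c)(i := arrive ports (rob c i) k, nr c := new_robot door),
                              ph := (ph c)(i := Idle, nr c := Idle)\<rparr>)"

definition execution :: "('v \<Rightarrow> 'v list) \<Rightarrow> 'v \<Rightarrow> (nat \<Rightarrow> 'v config) \<Rightarrow> bool" where
  "execution ports door e \<longleftrightarrow>
     e 0 = init_config door \<and> (\<forall>t. astep ports door (e t) (e (Suc t)) \<or> e (Suc t) = e t)"

definition leaders :: "'v config \<Rightarrow> nat set" where
  "leaders c = {i. i < nr c \<and> st (rob c i) = Leader}"

end

theory Submission
  imports Defs
begin


definition ppv :: "('v \<Rightarrow> 'v list) \<Rightarrow> 'v config \<Rightarrow> nat \<Rightarrow> 'v" where
  "ppv ports c i = ports (pos (rob c i)) ! the (pp (rob c i))"
definition spv :: "('v \<Rightarrow> 'v list) \<Rightarrow> 'v config \<Rightarrow> nat \<Rightarrow> 'v" where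
  "spv ports c i = ports (pos (rob c i)) ! the (sp (rob c i))"
definition empty_at :: "'v config \<Rightarrow> 'v \<Rightarrow> bool" where
  "empty_at c x \<longleftrightarrow> (\<forall>j<nr c. pos (rob c j) \<noteq> x)"
definition Wt :: "('v \<Rightarrow> 'v list) \<Rightarrow> 'v config \<Rightarrow> 'v \<Rightarrow> bool" where
  "Wt ports c t \<longleftrightarrow> empty_at c t \<and> (\<forall>j<nr c. st (rob c j) = Follower \<longrightarrow> ppv ports c j \<noteq> t)"
definition nconf :: "'v snapshot \<Rightarrow> 'v \<Rightarrow> bool" where
  "nconf S x \<longleftrightarrow> S x \<inter> {Conf, Conf2} = {}"
definition notMoving :: "'v config \<Rightarrow> nat \<Rightarrow> bool" where
  "notMoving c i \<longleftrightarrow> (\<forall>k. ph c i \<noteq> Moving k)"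

definition FI :: "('v \<Rightarrow> 'v list) \<Rightarrow> 'v config \<Rightarrow> nat \<Rightarrow> 'v snapshot \<Rightarrow> bool" where
  "FI ports c i S \<longleftrightarrow>
    (\<forall>x\<in>S (ppv ports c i). is_dir x \<and> x \<noteq> rcd (rob c i) \<longrightarrow>
        pos (rob c (i - 1)) = ppv ports c i \<and> col (rob c (i - 1)) = x) \<and>
    (S (ppv ports c i) = {} \<longrightarrow> ppv ports c i \<noteq> pos (rob c (i - 1))) \<and>
    (rcd (rob c i) = DStuck \<and> Off \<in> S (ppv ports c i) \<longrightarrow> st (rob c (i - 1)) = Finished)"

definition lead_ok :: "('v \<Rightarrow> 'v list) \<Rightarrow> 'v config \<Rightarrow> nat \<Rightarrow> bool" where
  "lead_ok ports c i \<longleftrightarrow>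
    (i \<noteq> 0 \<longrightarrow> st (rob c (i - 1)) = Finished) \<and>
    (\<forall>k. col (rob c i) = Dir k \<longrightarrow> k < length (ports (pos (rob c i))) \<and> Wt ports c (ports (pos (rob c i)) ! k)) \<and>
    (\<forall>k. ph c i = Moving k \<longrightarrow> Wt ports c (ports (pos (rob c i)) ! k)) \<and>
    (\<forall>S. ph c i = Looked S \<longrightarrow>
        (\<forall>k. \<not> is_dir (col (rob c i)) \<and> free_port ports S (pos (rob c i)) k \<longrightarrow> Wt ports c (ports (pos (rob c i)) ! k)) \<and>
        (\<forall>k. col (rob c i) = Dir k \<longrightarrow> S (ports (pos (rob c i)) ! k) = {}))"

definition fol_base :: "('v \<Rightarrow> 'v list) \<Rightarrow> 'v config \<Rightarrow> nat \<Rightarrow> bool" where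
  "fol_base ports c i \<longleftrightarrow> st (rob c i) = Follower \<and> (\<exists>j. pp (rob c i) = Some j \<and> j < length (ports (pos (rob c i))))"

definition snone_st :: "('v \<Rightarrow> 'v list) \<Rightarrow> 'v \<Rightarrow> 'v config \<Rightarrow> nat \<Rightarrow> bool" where
  "snone_st ports door c p \<longleftrightarrow> st (rob c (Suc p)) = SNone \<and> pos (rob c p) = ports door ! 0 \<and>
     spv ports c p = door \<and> notMoving c p \<and> (\<forall>S. ph c p = Looked S \<longrightarrow> nconf S door)"

definition A0 :: "('v \<Rightarrow> 'v list) \<Rightarrow> 'v config \<Rightarrow> nat \<Rightarrow> bool" where
  "A0 ports c p \<longleftrightarrow> rcd (rob c (Suc p)) = Off \<and> col (rob c (Suc p)) \<in> {Off, Mov} \<and> notMoving c p \<and>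
     (\<forall>S. ph c p = Looked S \<longrightarrow> nconf S (pos (rob c (Suc p))))"
definition A1 :: "'v config \<Rightarrow> nat \<Rightarrow> bool" where
  "A1 c p \<longleftrightarrow> is_dir (col (rob c p)) \<and> rcd (rob c (Suc p)) = col (rob c p) \<and> col (rob c (Suc p)) \<in> {Conf, Conf2}"
definition A2 :: "'v config \<Rightarrow> nat \<Rightarrow> bool" where
  "A2 c p \<longleftrightarrow> (\<exists>k. ph c p = Moving k \<and> rcd (rob c (Suc p)) = Dir k \<and> col (rob c (Suc p)) \<in> {Conf, Conf2})"

definition adj :: "('v \<Rightarrow> 'v list) \<Rightarrow> 'v config \<Rightarrow> nat \<Rightarrow> bool" where
  "adj ports c p \<longleftrightarrow> ppv ports c (Suc p) = pos (rob c p) \<and> spv ports c p = pos (rob c (Suc p)) \<and>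
     notMoving c (Suc p) \<and> (A0 ports c p \<or> A1 c p \<or> A2 c p)"

definition gap :: "('v \<Rightarrow> 'v list) \<Rightarrow> 'v config \<Rightarrow> nat \<Rightarrow> bool" where
  "gap ports c p \<longleftrightarrow> (let i = Suc p; a = ppv ports c i in
     empty_at c a \<and> spv ports c p = a \<and>
     (\<exists>d. rcd (rob c i) = Dir d \<and> d < length (ports a) \<and> ports a ! d = pos (rob c p)) \<and>
     (col (rob c i) \<in> {Conf, Conf2} \<or> col (rob c i) = Dir (the (pp (rob c i))) \<or>
        (col (rob c i) = Mov \<and> ph c i = Moving (the (pp (rob c i))))) \<and>
     notMoving c p \<and> (\<forall>S. ph c p = Looked S \<longrightarrow> nconf S a) \<and>
     (\<forall>k. ph c i = Moving k \<longrightarrow> k = the (pp (rob c i))))"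

definition pair_ok :: "('v \<Rightarrow> 'v list) \<Rightarrow> 'v \<Rightarrow> 'v config \<Rightarrow> nat \<Rightarrow> bool" where
  "pair_ok ports door c p \<longleftrightarrow> (\<exists>s. sp (rob c p) = Some s \<and> s < length (ports (pos (rob c p)))) \<and>
     (snone_st ports door c p \<or> (fol_base ports c (Suc p) \<and> (adj ports c p \<or> gap ports c p)))"

definition fin_ok :: "('v \<Rightarrow> 'v list) \<Rightarrow> 'v config \<Rightarrow> nat \<Rightarrow> bool" where
  "fin_ok ports c p \<longleftrightarrow> st (rob c (Suc p)) = Leader \<or> st (rob c (Suc p)) = Finished \<or>
     (fol_base ports c (Suc p) \<and> rcd (rob c (Suc p)) = DStuck \<and> ppv ports c (Suc p) = pos (rob c p) \<and>
      col (rob c (Suc p)) \<in> {Conf, Conf2} \<and> notMoving c (Suc p))"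

definition inj_ok :: "'v config \<Rightarrow> bool" where
  "inj_ok c \<longleftrightarrow> (\<forall>i<nr c. \<forall>j<nr c. pos (rob c i) = pos (rob c j) \<longrightarrow> i = j)"
definition V_ok :: "'v set \<Rightarrow> 'v config \<Rightarrow> bool" where
  "V_ok V c \<longleftrightarrow> (\<forall>i<nr c. pos (rob c i) \<in> V)"
definition mov_ok :: "('v \<Rightarrow> 'v list) \<Rightarrow> 'v config \<Rightarrow> bool" where
  "mov_ok ports c \<longleftrightarrow> (\<forall>i<nr c. \<forall>k. ph c i = Moving k \<longrightarrow> col (rob c i) = Mov \<and> k < length (ports (pos (rob c i))))"
definition fin_all :: "('v \<Rightarrow> 'v list) \<Rightarrow> 'v config \<Rightarrow> bool" where
  "fin_all ports c \<longleftrightarrow> (\<forall>i<nr c. st (rob c i) = Finished \<longrightarrow> col (rob c i) = Off \<and> notMoving c i \<and>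
        (\<forall>j<i. st (rob c j) = Finished) \<and> (Suc i < nr c \<longrightarrow> fin_ok ports c i))"
definition snone_all :: "('v \<Rightarrow> 'v list) \<Rightarrow> 'v \<Rightarrow> 'v config \<Rightarrow> bool" where
  "snone_all ports door c \<longleftrightarrow> (\<forall>i<nr c. st (rob c i) = SNone \<longrightarrow> Suc i = nr c \<and> col (rob c i) = Off \<and> notMoving c i \<and>
        (\<forall>S. ph c i = Looked S \<longrightarrow> (i = 0 \<longleftrightarrow> S (ports door ! 0) = {})))"
definition fol_all :: "('v \<Rightarrow> 'v list) \<Rightarrow> 'v config \<Rightarrow> bool" where
  "fol_all ports c \<longleftrightarrow> (\<forall>i<nr c. st (rob c i) = Follower \<longrightarrow> i \<noteq> 0 \<and> (\<forall>S. ph c i = Looked S \<longrightarrow> FI ports c i S))"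
definition lead_all :: "('v \<Rightarrow> 'v list) \<Rightarrow> 'v config \<Rightarrow> bool" where
  "lead_all ports c \<longleftrightarrow> (\<forall>i<nr c. st (rob c i) = Leader \<longrightarrow> lead_ok ports c i)"
definition pair_all :: "('v \<Rightarrow> 'v list) \<Rightarrow> 'v \<Rightarrow> 'v config \<Rightarrow> bool" where
  "pair_all ports door c \<longleftrightarrow> (\<forall>i. Suc i < nr c \<longrightarrow> st (rob c i) = Leader \<or> st (rob c i) = Follower \<longrightarrow> pair_ok ports door c i)"
definition ppv_all :: "('v \<Rightarrow> 'v list) \<Rightarrow> 'v config \<Rightarrow> bool" where
  "ppv_all ports c \<longleftrightarrow> (\<forall>i<nr c. \<forall>j<nr c. st (rob c i) = Follower \<longrightarrow> st (rob c j) = Follower \<longrightarrow>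
        ppv ports c i = ppv ports c j \<longrightarrow> i = j)"

definition binv :: "'v set \<Rightarrow> ('v \<Rightarrow> 'v list) \<Rightarrow> 'v \<Rightarrow> 'v config \<Rightarrow> bool" where
  "binv V ports door c \<longleftrightarrow> nr c \<ge> 1 \<and> pos (rob c (nr c - 1)) = door \<and> inj_ok c \<and> V_ok V c \<and> mov_ok ports c \<and>
     fin_all ports c \<and> snone_all ports door c \<and> fol_all ports c \<and> lead_all ports c \<and> pair_all ports door c \<and> ppv_all ports c"

lemma pg_nb:
  assumes "port_graph V ports door Delta" "u \<in> V" "w \<in> set (ports u)"
  shows "w \<in> V" "u \<in> set (ports w)"
  using assms unfolding port_graph_def by blast+

lemma pg_port_of:
  assumes "port_graph V ports door Delta" "u \<in> V" "w \<in> set (ports u)"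
  shows "port_of ports w u < length (ports w)" "ports w ! port_of ports w u = u"
proof -
  have w: "w \<in> V" "u \<in> set (ports w)" using pg_nb[OF assms] by auto
  have d: "distinct (ports w)" using assms(1) w(1) unfolding port_graph_def by blast
  obtain j where j: "j < length (ports w)" "ports w ! j = u" using w(2) by (metis in_set_conv_nth)
  have "port_of ports w u = j"
    unfolding port_of_def
  proof (rule the_equality)
    show "j < length (ports w) \<and> ports w ! j = u" using j by simp
    fix j' assume "j' < length (ports w) \<and> ports w ! j' = u"
    then show "j' = j" using j d by (metis nth_eq_iff_index_eq)
  qed
  then show "port_of ports w u < length (ports w)" "ports w ! port_of ports w u = u" using j by auto
qed

lemma pg_door:
  assumes "port_graph V ports door Delta"
  shows "length (ports door) = 1" "ports door ! 0 \<noteq> door" "door \<in> V" "ports door ! 0 \<in> V"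
    "set (ports door) = {ports door ! 0}"
proof -
  show l: "length (ports door) = 1" using assms unfolding port_graph_def by blast
  have dv: "door \<in> V" using assms unfolding port_graph_def by blast
  then show "door \<in> V" .
  have "door \<notin> set (ports door)" using assms dv unfolding port_graph_def by blast
  moreover have m: "ports door ! 0 \<in> set (ports door)" using l by simp
  ultimately show "ports door ! 0 \<noteq> door" by metis
  show "ports door ! 0 \<in> V" using pg_nb(1)[OF assms dv m] .
  from l obtain x where "ports door = [x]" by (auto simp: length_Suc_conv)
  then show "set (ports door) = {ports door ! 0}" by simp
qed

lemma within2_nb: "x \<in> set (ports u) \<Longrightarrow> within2 ports u x"
  unfolding within2_def by blast
lemma within2_nb2: "w \<in> set (ports u) \<Longrightarrow> x \<in> set (ports w) \<Longrightarrow> within2 ports u x"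
  unfolding within2_def by blast

lemma view_nb: "within2 ports u x \<Longrightarrow> view ports c u x = lights_at c x"
  unfolding view_def by simp

lemma lights_occ:
  assumes "\<forall>i<nr c. \<forall>j<nr c. pos (rob c i) = pos (rob c j) \<longrightarrow> i = j" "i < nr c"
  shows "lights_at c (pos (rob c i)) = {col (rob c i)}"
  using assms unfolding lights_at_def by auto

lemma lights_empty: "empty_at c x \<longleftrightarrow> lights_at c x = {}"
  unfolding lights_at_def empty_at_def by auto

lemma lights_mem: "y \<in> lights_at c x \<Longrightarrow> \<exists>j<nr c. pos (rob c j) = x \<and> col (rob c j) = y"
  unfolding lights_at_def by auto

lemma nconf_occ:
  assumes "\<forall>i<nr c. \<forall>j<nr c. pos (rob c i) = pos (rob c j) \<longrightarrow> i = j" "i < nr c"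
    "within2 ports u (pos (rob c i))" "col (rob c i) \<notin> {Conf, Conf2}"
  shows "nconf (view ports c u) (pos (rob c i))"
  using assms by (simp add: nconf_def view_nb lights_occ)

lemma nconf_empty:
  assumes "empty_at c x"
  shows "nconf (view ports c u) x"
  using assms by (simp add: nconf_def view_def lights_empty)


lemma binvD:
  assumes "binv V ports door c"
  shows binv_nr: "nr c \<ge> 1"
    and binv_door: "pos (rob c (nr c - 1)) = door"
    and binv_inj: "\<forall>i<nr c. \<forall>j<nr c. pos (rob c i) = pos (rob c j) \<longrightarrow> i = j"
    and binv_V: "\<And>i. i < nr c \<Longrightarrow> pos (rob c i) \<in> V"
    and binv_mov: "\<And>i k. i < nr c \<Longrightarrow> ph c i = Moving k \<Longrightarrow> col (rob c i) = Mov \<and> k < length (ports (pos (rob c i)))"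
    and binv_fin: "\<And>i. i < nr c \<Longrightarrow> st (rob c i) = Finished \<Longrightarrow> col (rob c i) = Off \<and> notMoving c i \<and>
        (\<forall>j<i. st (rob c j) = Finished) \<and> (Suc i < nr c \<longrightarrow> fin_ok ports c i)"
    and binv_snone: "\<And>i. i < nr c \<Longrightarrow> st (rob c i) = SNone \<Longrightarrow> Suc i = nr c \<and> col (rob c i) = Off \<and> notMoving c i \<and>
        (\<forall>S. ph c i = Looked S \<longrightarrow> (i = 0 \<longleftrightarrow> S (ports door ! 0) = {}))"
    and binv_fol: "\<And>i. i < nr c \<Longrightarrow> st (rob c i) = Follower \<Longrightarrow> i \<noteq> 0 \<and> (\<forall>S. ph c i = Looked S \<longrightarrow> FI ports c i S)"
    and binv_lead: "\<And>i. i < nr c \<Longrightarrow> st (rob c i) = Leader \<Longrightarrow> lead_ok ports c i"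
    and binv_pair: "\<And>i. Suc i < nr c \<Longrightarrow> st (rob c i) = Leader \<or> st (rob c i) = Follower \<Longrightarrow> pair_ok ports door c i"
    and binv_ppv: "\<And>i j. i < nr c \<Longrightarrow> j < nr c \<Longrightarrow> st (rob c i) = Follower \<Longrightarrow> st (rob c j) = Follower \<Longrightarrow>
        ppv ports c i = ppv ports c j \<Longrightarrow> i = j"
proof -
  have A: "nr c \<ge> 1" "pos (rob c (nr c - 1)) = door" "inj_ok c" "V_ok V c" "mov_ok ports c"
     "fin_all ports c" "snone_all ports door c" "fol_all ports c" "lead_all ports c" "pair_all ports door c" "ppv_all ports c"
    using assms unfolding binv_def by simp_all
  show "nr c \<ge> 1" "pos (rob c (nr c - 1)) = door" by (fact A)+
  show "\<forall>i<nr c. \<forall>j<nr c. pos (rob c i) = pos (rob c j) \<longrightarrow> i = j" using A(3) unfolding inj_ok_def .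
  show "\<And>i. i < nr c \<Longrightarrow> pos (rob c i) \<in> V" using A(4) unfolding V_ok_def by blast
  show "\<And>i k. i < nr c \<Longrightarrow> ph c i = Moving k \<Longrightarrow> col (rob c i) = Mov \<and> k < length (ports (pos (rob c i)))"
    using A(5) unfolding mov_ok_def by blast
  show "\<And>i. i < nr c \<Longrightarrow> st (rob c i) = Finished \<Longrightarrow> col (rob c i) = Off \<and> notMoving c i \<and>
        (\<forall>j<i. st (rob c j) = Finished) \<and> (Suc i < nr c \<longrightarrow> fin_ok ports c i)"
    using A(6) unfolding fin_all_def by blast
  show "\<And>i. i < nr c \<Longrightarrow> st (rob c i) = SNone \<Longrightarrow> Suc i = nr c \<and> col (rob c i) = Off \<and> notMoving c i \<and>
        (\<forall>S. ph c i = Looked S \<longrightarrow> (i = 0 \<longleftrightarrow> S (ports door ! 0) = {}))"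
    using A(7) unfolding snone_all_def by blast
  show "\<And>i. i < nr c \<Longrightarrow> st (rob c i) = Follower \<Longrightarrow> i \<noteq> 0 \<and> (\<forall>S. ph c i = Looked S \<longrightarrow> FI ports c i S)"
    using A(8) unfolding fol_all_def by blast
  show "\<And>i. i < nr c \<Longrightarrow> st (rob c i) = Leader \<Longrightarrow> lead_ok ports c i"
    using A(9) unfolding lead_all_def by blast
  show "\<And>i. Suc i < nr c \<Longrightarrow> st (rob c i) = Leader \<or> st (rob c i) = Follower \<Longrightarrow> pair_ok ports door c i"
    using A(10) unfolding pair_all_def by blast
  show "\<And>i j. i < nr c \<Longrightarrow> j < nr c \<Longrightarrow> st (rob c i) = Follower \<Longrightarrow> st (rob c j) = Follower \<Longrightarrow>
        ppv ports c i = ppv ports c j \<Longrightarrow> i = j"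
    using A(11) unfolding ppv_all_def by blast
qed

lemma binvI:
  assumes "nr c \<ge> 1"
    and "pos (rob c (nr c - 1)) = door"
    and "\<forall>i<nr c. \<forall>j<nr c. pos (rob c i) = pos (rob c j) \<longrightarrow> i = j"
    and "\<And>i. i < nr c \<Longrightarrow> pos (rob c i) \<in> V"
    and "\<And>i k. i < nr c \<Longrightarrow> ph c i = Moving k \<Longrightarrow> col (rob c i) = Mov \<and> k < length (ports (pos (rob c i)))"
    and "\<And>i. i < nr c \<Longrightarrow> st (rob c i) = Finished \<Longrightarrow> col (rob c i) = Off \<and> notMoving c i \<and>
        (\<forall>j<i. st (rob c j) = Finished) \<and> (Suc i < nr c \<longrightarrow> fin_ok ports c i)"
    and "\<And>i. i < nr c \<Longrightarrow> st (rob c i) = SNone \<Longrightarrow> Suc i = nr c \<and> col (rob c i) = Off \<and> notMoving c i \<and>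
        (\<forall>S. ph c i = Looked S \<longrightarrow> (i = 0 \<longleftrightarrow> S (ports door ! 0) = {}))"
    and "\<And>i. i < nr c \<Longrightarrow> st (rob c i) = Follower \<Longrightarrow> i \<noteq> 0 \<and> (\<forall>S. ph c i = Looked S \<longrightarrow> FI ports c i S)"
    and "\<And>i. i < nr c \<Longrightarrow> st (rob c i) = Leader \<Longrightarrow> lead_ok ports c i"
    and "\<And>i. Suc i < nr c \<Longrightarrow> st (rob c i) = Leader \<or> st (rob c i) = Follower \<Longrightarrow> pair_ok ports door c i"
    and "\<And>i j. i < nr c \<Longrightarrow> j < nr c \<Longrightarrow> st (rob c i) = Follower \<Longrightarrow> st (rob c j) = Follower \<Longrightarrow>
        ppv ports c i = ppv ports c j \<Longrightarrow> i = j"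
  shows "binv V ports door c"
proof -
  have "inj_ok c" unfolding inj_ok_def using assms(3) .
  moreover have "V_ok V c" unfolding V_ok_def using assms(4) by blast
  moreover have "mov_ok ports c" unfolding mov_ok_def using assms(5) by blast
  moreover have "fin_all ports c" unfolding fin_all_def using assms(6) by blast
  moreover have "snone_all ports door c" unfolding snone_all_def using assms(7) by blast
  moreover have "fol_all ports c" unfolding fol_all_def using assms(8) by blast
  moreover have "lead_all ports c" unfolding lead_all_def using assms(9) by blast
  moreover have "pair_all ports door c" unfolding pair_all_def using assms(10) by blast
  moreover have "ppv_all ports c" unfolding ppv_all_def using assms(11) by blast
  ultimately show ?thesis unfolding binv_def using assms(1,2) by simp
qed

lemma init_binv:
  assumes "port_graph V ports door Delta"
  shows "binv V ports door (init_config door)"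
proof (rule binvI)
  show "\<And>i. i < nr (init_config door) \<Longrightarrow> pos (rob (init_config door) i) \<in> V"
    using pg_door(3)[OF assms] by (simp add: init_config_def new_robot_def)
qed (simp_all add: init_config_def new_robot_def notMoving_def)

lemma inv_leaders:
  assumes "binv V ports door c" shows "card (leaders c) \<le> 1"
proof -
  note L = binv_lead[OF assms]
  have F: "\<And>i j. i < nr c \<Longrightarrow> st (rob c i) = Finished \<Longrightarrow> j < i \<Longrightarrow> st (rob c j) = Finished"
    using binv_fin[OF assms] by blast
  have key: "False" if "a \<in> leaders c" "b \<in> leaders c" "a < b" for a b
  proof -
    have b: "b < nr c" "st (rob c b) = Leader" and a: "st (rob c a) = Leader"
      using that by (auto simp: leaders_def)
    have "st (rob c (b - 1)) = Finished" using L[OF b] that(3) by (auto simp: lead_ok_def)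
    moreover have "b - 1 < nr c" using b by simp
    ultimately have "st (rob c a) = Finished"
      using F[of "b - 1" a] that(3) by (cases "a = b - 1") auto
    then show False using a by simp
  qed
  have "\<forall>i\<in>leaders c. \<forall>j\<in>leaders c. i = j"
    using key by (metis linorder_neqE_nat)
  then have "leaders c = {} \<or> (\<exists>x. leaders c = {x})" by blast
  then show ?thesis by auto
qed



lemma fol_cases:
  assumes I: "binv V ports door c" and i: "i < nr c" "st (rob c i) = Follower"
  shows "i \<noteq> 0 \<and> fol_base ports c i \<and>
    ((st (rob c (i - 1)) = Finished \<and> rcd (rob c i) = DStuck \<and> ppv ports c i = pos (rob c (i - 1)) \<and>
        col (rob c i) \<in> {Conf, Conf2} \<and> notMoving c i)
     \<or> ((st (rob c (i - 1)) = Leader \<or> st (rob c (i - 1)) = Follower) \<and> pair_ok ports door c (i - 1) \<and>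
        (adj ports c (i - 1) \<or> gap ports c (i - 1))))"
proof -
  have i0: "i \<noteq> 0" using binv_fol[OF I i] by simp
  then have si: "Suc (i - 1) = i" by simp
  have lt: "i - 1 < nr c" using i by simp
  show ?thesis
  proof (cases "st (rob c (i - 1))")
    case SNone
    then show ?thesis using binv_snone[OF I lt] i si by simp
  next
    case Finished
    then have "fin_ok ports c (i - 1)" using binv_fin[OF I lt] i si by simp
    then show ?thesis using i0 i Finished unfolding fin_ok_def si by auto
  next
    case Leader
    then have "pair_ok ports door c (i - 1)" using binv_pair[OF I] i si by simp
    then show ?thesis using i0 i Leader unfolding pair_ok_def snone_st_def si by auto
  next
    case Follower
    then have "pair_ok ports door c (i - 1)" using binv_pair[OF I] i si by simp
    then show ?thesis using i0 i Follower unfolding pair_ok_def snone_st_def si by auto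
  qed
qed

lemma ppv_nb:
  assumes "fol_base ports c i"
  shows "ppv ports c i \<in> set (ports (pos (rob c i)))"
  using assms unfolding fol_base_def ppv_def by auto

lemma spv_nb:
  assumes "sp (rob c p) = Some s" "s < length (ports (pos (rob c p)))"
  shows "spv ports c p \<in> set (ports (pos (rob c p)))"
  using assms unfolding spv_def by auto

lemma look_FI:
  assumes I: "binv V ports door c" and i: "i < nr c" "st (rob c i) = Follower"
  shows "FI ports c i (view ports c (pos (rob c i)))"
proof -
  note fc = fol_cases[OF I i]
  have inj: "\<forall>i<nr c. \<forall>j<nr c. pos (rob c i) = pos (rob c j) \<longrightarrow> i = j" using binv_inj[OF I] .
  have w: "within2 ports (pos (rob c i)) (ppv ports c i)" using ppv_nb fc within2_nb by metis
  then have S: "view ports c (pos (rob c i)) (ppv ports c i) = lights_at c (ppv ports c i)" by (rule view_nb)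
  have lt: "i - 1 < nr c" using i by simp
  show ?thesis
  proof (cases "ppv ports c i = pos (rob c (i - 1))")
    case True
    then have L: "lights_at c (ppv ports c i) = {col (rob c (i - 1))}" using lights_occ[OF inj lt] by simp
    have fin: "st (rob c (i - 1)) = Finished \<Longrightarrow> col (rob c (i - 1)) = Off" using binv_fin[OF I lt] by simp
    have nd: "rcd (rob c i) = DStuck \<Longrightarrow> col (rob c (i - 1)) = Off \<Longrightarrow> st (rob c (i - 1)) = Finished"
    proof -
      assume a: "rcd (rob c i) = DStuck" "col (rob c (i - 1)) = Off"
      from fc have "st (rob c (i - 1)) = Finished \<or> adj ports c (i - 1) \<or> gap ports c (i - 1)" by blast
      moreover have "\<not> gap ports c (i - 1)" using True lt unfolding gap_def empty_at_def Let_def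
        using i(1) by (metis One_nat_def Suc_pred' not_gr_zero fc)
      moreover have "\<not> adj ports c (i - 1)" using a fc unfolding adj_def A0_def A1_def A2_def
        by (auto simp: is_dir_def)
      ultimately show ?thesis by blast
    qed
    show ?thesis unfolding FI_def S L using True nd by (auto simp: is_dir_def)
  next
    case False
    then have "gap ports c (i - 1)" using fc unfolding adj_def by auto
    then have "empty_at c (ppv ports c i)" using fc unfolding gap_def Let_def by auto
    then have "lights_at c (ppv ports c i) = {}" by (simp add: lights_empty)
    then show ?thesis unfolding FI_def S using False by auto
  qed
qed


lemma look_snone:
  assumes pg: "port_graph V ports door Delta" and I: "binv V ports door c"
    and i: "i < nr c" "st (rob c i) = SNone"
  shows "i = 0 \<longleftrightarrow> view ports c (pos (rob c i)) (ports door ! 0) = {}"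
proof -
  have n: "Suc i = nr c" using binv_snone[OF I i] by simp
  then have pd: "pos (rob c i) = door" using binv_door[OF I] by (metis diff_Suc_1)
  have w: "within2 ports door (ports door ! 0)" using pg_door(1)[OF pg] by (intro within2_nb) simp
  have S: "view ports c (pos (rob c i)) (ports door ! 0) = lights_at c (ports door ! 0)"
    unfolding pd using view_nb[OF w] .
  show ?thesis
  proof
    assume "i = 0"
    then have "nr c = 1" using n by simp
    then have "empty_at c (ports door ! 0)" unfolding empty_at_def
      using pd \<open>i = 0\<close> pg_door(2)[OF pg] by auto
    then show "view ports c (pos (rob c i)) (ports door ! 0) = {}" unfolding S by (simp add: lights_empty)
  next
    assume v: "view ports c (pos (rob c i)) (ports door ! 0) = {}"
    show "i = 0"
    proof (rule ccontr)
      assume i0: "i \<noteq> 0"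
      then have si: "Suc (i - 1) = i" by simp
      have lt: "i - 1 < nr c" using i by simp
      have "pos (rob c (i - 1)) = ports door ! 0"
      proof (cases "st (rob c (i - 1))")
        case SNone
        then show ?thesis using binv_snone[OF I lt] i si by simp
      next
        case Finished
        then have "fin_ok ports c (i - 1)" using binv_fin[OF I lt] i si by simp
        then show ?thesis using i Finished unfolding fin_ok_def fol_base_def si by auto
      next
        case Leader
        then have "pair_ok ports door c (i - 1)" using binv_pair[OF I] i si by simp
        then show ?thesis using i unfolding pair_ok_def snone_st_def fol_base_def si by auto
      next
        case Follower
        then have "pair_ok ports door c (i - 1)" using binv_pair[OF I] i si by simp
        then show ?thesis using i unfolding pair_ok_def snone_st_def fol_base_def si by auto
      qed
      then have "\<not> empty_at c (ports door ! 0)" unfolding empty_at_def using lt by blast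
      then show False using v unfolding S by (simp add: lights_empty)
    qed
  qed
qed

lemma gap_col:
  assumes "gap ports c p"
  shows "col (rob c (Suc p)) \<noteq> Off \<and> col (rob c (Suc p)) \<noteq> DStuck"
  using assms unfolding gap_def Let_def by auto

lemma look_free:
  assumes pg: "port_graph V ports door Delta" and I: "binv V ports door c"
    and r: "r < nr c" "st (rob c r) = Leader"
    and fp: "free_port ports (view ports c (pos (rob c r))) (pos (rob c r)) k"
  shows "Wt ports c (ports (pos (rob c r)) ! k)"
proof -
  let ?u = "pos (rob c r)"
  let ?t = "ports ?u ! k"
  let ?S = "view ports c ?u"
  have inj: "\<forall>i<nr c. \<forall>j<nr c. pos (rob c i) = pos (rob c j) \<longrightarrow> i = j" using binv_inj[OF I] .
  have k: "k < length (ports ?u)" and St: "?S ?t = {}"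
    and blk: "\<forall>w\<in>set (ports ?t). w \<noteq> ?u \<longrightarrow> (\<forall>x\<in>?S w. x = Off \<or> x = DStuck)"
    using fp unfolding free_port_def by auto
  have tin: "?t \<in> set (ports ?u)" using k by simp
  have "lights_at c ?t = {}" using St view_nb[OF within2_nb[where ports=ports, OF tin]] by simp
  then have E: "empty_at c ?t" by (simp add: lights_empty)
  have "ppv ports c j \<noteq> ?t" if j: "j < nr c" "st (rob c j) = Follower" for j
  proof
    assume eq: "ppv ports c j = ?t"
    note fc = fol_cases[OF I j]
    have lt: "j - 1 < nr c" using j by simp
    have "ppv ports c j \<noteq> pos (rob c (j - 1))" using E eq lt unfolding empty_at_def by auto
    then have g: "gap ports c (j - 1)" using fc unfolding adj_def by auto
    have sj: "Suc (j - 1) = j" using fc by simp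
    have cj: "col (rob c j) \<noteq> Off \<and> col (rob c j) \<noteq> DStuck" using gap_col[OF g] sj by simp
    have pj: "pos (rob c j) \<in> V" using binv_V[OF I j(1)] .
    have "ppv ports c j \<in> set (ports (pos (rob c j)))" using ppv_nb fc by blast
    then have jt: "pos (rob c j) \<in> set (ports ?t)" using pg_nb(2)[OF pg pj] eq by simp
    have jne: "pos (rob c j) \<noteq> ?u" using inj j r by auto
    have w2: "within2 ports ?u (pos (rob c j))" using within2_nb2[where ports=ports, OF tin jt] .
    have "?S (pos (rob c j)) = {col (rob c j)}" using view_nb[OF w2] lights_occ[OF inj j(1)] by simp
    then show False using blk jt jne cj by auto
  qed
  then show ?thesis unfolding Wt_def using E by blast
qed

lemma look_dir:
  assumes I: "binv V ports door c" and r: "r < nr c" "st (rob c r) = Leader" and d: "col (rob c r) = Dir k"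
  shows "view ports c (pos (rob c r)) (ports (pos (rob c r)) ! k) = {}"
proof -
  have "Wt ports c (ports (pos (rob c r)) ! k)" using binv_lead[OF I r] d unfolding lead_ok_def by blast
  then have "lights_at c (ports (pos (rob c r)) ! k) = {}" unfolding Wt_def by (simp add: lights_empty)
  then show ?thesis unfolding view_def by simp
qed

lemma fin_ok_cong:
  assumes "rob c' = rob c" "\<forall>i. notMoving c' i = notMoving c i"
  shows "fin_ok ports c' p = fin_ok ports c p"
  using assms unfolding fin_ok_def fol_base_def ppv_def by simp

lemma pair_ok_cong:
  assumes "rob c' = rob c" "nr c' = nr c" "ph c' p = ph c p" "\<forall>k. (ph c' (Suc p) = Moving k) = (ph c (Suc p) = Moving k)"
  shows "pair_ok ports door c' p = pair_ok ports door c p"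
  using assms unfolding pair_ok_def snone_st_def fol_base_def adj_def gap_def A0_def A1_def A2_def
    notMoving_def ppv_def spv_def empty_at_def Let_def by simp

lemma look_pair:
  assumes pg: "port_graph V ports door Delta" and I: "binv V ports door c"
    and p: "Suc p < nr c" "pair_ok ports door c p" "ph c p = Idle"
    and c': "c' = c\<lparr>ph := (ph c)(p := Looked (view ports c (pos (rob c p))))\<rparr>"
  shows "pair_ok ports door c' p"
proof -
  have inj: "\<forall>i<nr c. \<forall>j<nr c. pos (rob c i) = pos (rob c j) \<longrightarrow> i = j" using binv_inj[OF I] .
  let ?S = "view ports c (pos (rob c p))"
  obtain s where s: "sp (rob c p) = Some s" "s < length (ports (pos (rob c p)))" using p(2) unfolding pair_ok_def by blast
  have w: "within2 ports (pos (rob c p)) (spv ports c p)" using within2_nb[where ports=ports, OF spv_nb[where ports=ports, OF s]] .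
  have nm: "\<forall>i. notMoving c' i = notMoving c i" using p(3) c' unfolding notMoving_def by auto
  have E: "empty_at c' = empty_at c" "ppv ports c' = ppv ports c" "spv ports c' = spv ports c"
    using c' by (auto simp: empty_at_def ppv_def spv_def fun_eq_iff)
  have ph': "ph c' p = Looked ?S" "\<forall>k. (ph c' (Suc p) = Moving k) = (ph c (Suc p) = Moving k)"
    using c' p(3) by auto
  have sn: "nconf ?S door" if "snone_st ports door c p"
  proof -
    have sn1: "st (rob c (Suc p)) = SNone" "spv ports c p = door" using that unfolding snone_st_def by auto
    have "Suc (Suc p) = nr c" using binv_snone[OF I p(1) sn1(1)] by simp
    then have "pos (rob c (Suc p)) = door" using binv_door[OF I] by (metis diff_Suc_1)
    moreover have "col (rob c (Suc p)) = Off" using binv_snone[OF I p(1) sn1(1)] by simp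
    ultimately show ?thesis using nconf_occ[OF inj p(1), of ports "pos (rob c p)"] w sn1 by simp
  qed
  have a0: "nconf ?S (pos (rob c (Suc p)))" if "adj ports c p" "A0 ports c p"
  proof -
    have "spv ports c p = pos (rob c (Suc p))" "col (rob c (Suc p)) \<in> {Off, Mov}" using that unfolding adj_def A0_def by auto
    then show ?thesis using nconf_occ[OF inj p(1)] w by auto
  qed
  have gp: "nconf ?S (ppv ports c (Suc p))" if "gap ports c p"
    using that nconf_empty[of c "ppv ports c (Suc p)" ports "pos (rob c p)"] unfolding gap_def Let_def by blast
  have phs: "ph c' (Suc p) = ph c (Suc p)" "rob c' = rob c" using c' by auto
  have nmp: "notMoving c' p" "notMoving c p" using ph'(1) p(3) unfolding notMoving_def by auto
  have sp': "\<exists>s. sp (rob c' p) = Some s \<and> s < length (ports (pos (rob c' p)))" using s phs by auto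
  have fb: "fol_base ports c' (Suc p) = fol_base ports c (Suc p)" unfolding fol_base_def phs by simp
  consider "snone_st ports door c p" | "fol_base ports c (Suc p)" "adj ports c p" | "fol_base ports c (Suc p)" "gap ports c p"
    using p(2) unfolding pair_ok_def by blast
  then show ?thesis
  proof cases
    case 1
    then have "snone_st ports door c' p" using sn[OF 1] nmp ph'(1) E phs unfolding snone_st_def by auto
    then show ?thesis using sp' unfolding pair_ok_def by blast
  next
    case 2
    have "A0 ports c p \<or> A1 c p" using 2(2) p(3) unfolding adj_def A2_def by auto
    then have "A0 ports c' p \<or> A1 c' p"
    proof
      assume "A0 ports c p"
      then show ?thesis using a0[OF 2(2)] nmp ph'(1) phs unfolding A0_def by auto
    qed (auto simp: A1_def phs)
    then have "adj ports c' p" using 2(2) E phs unfolding adj_def notMoving_def by auto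
    then show ?thesis using sp' fb 2(1) unfolding pair_ok_def by blast
  next
    case 3
    have "gap ports c' p" using 3(2) gp[OF 3(2)] E phs nmp ph'(1) unfolding gap_def Let_def by auto
    then show ?thesis using sp' fb 3(1) unfolding pair_ok_def by blast
  qed
qed


lemma look_pres:
  assumes pg: "port_graph V ports door Delta" and I: "binv V ports door c"
    and r: "r < nr c" "ph c r = Idle"
  shows "binv V ports door (c\<lparr>ph := (ph c)(r := Looked (view ports c (pos (rob c r))))\<rparr>)"
    (is "binv V ports door ?c'")
proof -
  let ?S = "view ports c (pos (rob c r))"
  have rb: "rob ?c' = rob c" "nr ?c' = nr c" by auto
  have nm: "\<forall>i. notMoving ?c' i = notMoving c i" using r(2) unfolding notMoving_def by auto
  have E: "empty_at ?c' = empty_at c" "ppv ports ?c' = ppv ports c" "Wt ports ?c' = Wt ports c"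
    by (auto simp: empty_at_def ppv_def Wt_def fun_eq_iff)
  have FIe: "FI ports ?c' = FI ports c" by (auto simp: FI_def ppv_def fun_eq_iff)
  show ?thesis
  proof (rule binvI)
    show "1 \<le> nr ?c'" using binv_nr[OF I] by simp
    show "pos (rob ?c' (nr ?c' - 1)) = door" using binv_door[OF I] by simp
    show "\<forall>i<nr ?c'. \<forall>j<nr ?c'. pos (rob ?c' i) = pos (rob ?c' j) \<longrightarrow> i = j" using binv_inj[OF I] by simp
    show "\<And>i. i < nr ?c' \<Longrightarrow> pos (rob ?c' i) \<in> V" using binv_V[OF I] by simp
    show "\<And>i k. i < nr ?c' \<Longrightarrow> ph ?c' i = Moving k \<Longrightarrow> col (rob ?c' i) = Mov \<and> k < length (ports (pos (rob ?c' i)))"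
      using binv_mov[OF I] by (auto split: if_splits)
    show "\<And>i. i < nr ?c' \<Longrightarrow> st (rob ?c' i) = Finished \<Longrightarrow> col (rob ?c' i) = Off \<and> notMoving ?c' i \<and>
        (\<forall>j<i. st (rob ?c' j) = Finished) \<and> (Suc i < nr ?c' \<longrightarrow> fin_ok ports ?c' i)"
      using binv_fin[OF I] nm fin_ok_cong[OF rb(1) nm] by simp
    show "\<And>i. i < nr ?c' \<Longrightarrow> st (rob ?c' i) = SNone \<Longrightarrow> Suc i = nr ?c' \<and> col (rob ?c' i) = Off \<and> notMoving ?c' i \<and>
        (\<forall>S. ph ?c' i = Looked S \<longrightarrow> (i = 0 \<longleftrightarrow> S (ports door ! 0) = {}))"
    proof -
      fix i assume i: "i < nr ?c'" "st (rob ?c' i) = SNone"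
      then have i': "i < nr c" "st (rob c i) = SNone" by auto
      show "Suc i = nr ?c' \<and> col (rob ?c' i) = Off \<and> notMoving ?c' i \<and>
        (\<forall>S. ph ?c' i = Looked S \<longrightarrow> (i = 0 \<longleftrightarrow> S (ports door ! 0) = {}))"
        using binv_snone[OF I i'] nm look_snone[OF pg I i'] by (cases "i = r") auto
    qed
    show "\<And>i. i < nr ?c' \<Longrightarrow> st (rob ?c' i) = Follower \<Longrightarrow> i \<noteq> 0 \<and> (\<forall>S. ph ?c' i = Looked S \<longrightarrow> FI ports ?c' i S)"
    proof -
      fix i assume i: "i < nr ?c'" "st (rob ?c' i) = Follower"
      then have i': "i < nr c" "st (rob c i) = Follower" by auto
      show "i \<noteq> 0 \<and> (\<forall>S. ph ?c' i = Looked S \<longrightarrow> FI ports ?c' i S)"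
        using binv_fol[OF I i'] look_FI[OF I i'] unfolding FIe by (cases "i = r") auto
    qed
    show "\<And>i. i < nr ?c' \<Longrightarrow> st (rob ?c' i) = Leader \<Longrightarrow> lead_ok ports ?c' i"
    proof -
      fix i assume i: "i < nr ?c'" "st (rob ?c' i) = Leader"
      then have i': "i < nr c" "st (rob c i) = Leader" by auto
      have L: "lead_ok ports c i" using binv_lead[OF I i'] .
      show "lead_ok ports ?c' i"
      proof (cases "i = r")
        case True
        then show ?thesis using L look_free[OF pg I i'] look_dir[OF I i'] r(2) unfolding lead_ok_def E
          by auto
      next
        case False
        then show ?thesis using L unfolding lead_ok_def E by auto
      qed
    qed
    show "\<And>i. Suc i < nr ?c' \<Longrightarrow> st (rob ?c' i) = Leader \<or> st (rob ?c' i) = Follower \<Longrightarrow> pair_ok ports door ?c' i"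
    proof -
      fix i assume i: "Suc i < nr ?c'" "st (rob ?c' i) = Leader \<or> st (rob ?c' i) = Follower"
      then have i': "Suc i < nr c" "st (rob c i) = Leader \<or> st (rob c i) = Follower" by auto
      have P: "pair_ok ports door c i" using binv_pair[OF I i'] .
      show "pair_ok ports door ?c' i"
      proof (cases "i = r")
        case True
        then show ?thesis using look_pair[OF pg I i'(1) P] r(2) by simp
      next
        case False
        have "\<forall>k. (ph ?c' (Suc i) = Moving k) = (ph c (Suc i) = Moving k)" using r(2) by auto
        then show ?thesis using pair_ok_cong[of ?c' c i, OF rb] P False by simp
      qed
    qed
    show "\<And>i j. i < nr ?c' \<Longrightarrow> j < nr ?c' \<Longrightarrow> st (rob ?c' i) = Follower \<Longrightarrow> st (rob ?c' j) = Follower \<Longrightarrow>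
        ppv ports ?c' i = ppv ports ?c' j \<Longrightarrow> i = j"
      using binv_ppv[OF I] unfolding E by simp
  qed
qed


lemma lead_ok_mono:
  assumes "lead_ok ports c i" "rob c' i = rob c i" "i \<noteq> 0 \<Longrightarrow> st (rob c' (i - 1)) = st (rob c (i - 1))"
    "ph c' i = ph c i" "\<And>t. Wt ports c t \<Longrightarrow> Wt ports c' t"
  shows "lead_ok ports c' i"
  using assms unfolding lead_ok_def by (metis (no_types, lifting))

lemma FI_cong:
  assumes "rob c' i = rob c i" "rob c' (i - 1) = rob c (i - 1)"
  shows "FI ports c' i S = FI ports c i S"
  using assms unfolding FI_def ppv_def by simp

lemma fin_ok_cong2:
  assumes "rob c' i = rob c i" "rob c' (Suc i) = rob c (Suc i)" "ph c' (Suc i) = ph c (Suc i)"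
  shows "fin_ok ports c' i = fin_ok ports c i"
  using assms unfolding fin_ok_def fol_base_def ppv_def notMoving_def by simp

lemma pair_ok_cong2:
  assumes "rob c' i = rob c i" "rob c' (Suc i) = rob c (Suc i)" "ph c' i = ph c i" "ph c' (Suc i) = ph c (Suc i)"
    "empty_at c' = empty_at c"
  shows "pair_ok ports door c' i = pair_ok ports door c i"
  using assms unfolding pair_ok_def snone_st_def fol_base_def adj_def gap_def A0_def A1_def A2_def
    notMoving_def ppv_def spv_def Let_def by simp

lemma compute_frame:
  assumes pg: "port_graph V ports door Delta" and I: "binv V ports door c" and r: "r < nr c"
    and c': "c' = c\<lparr>rob := (rob c)(r := r'), ph := (ph c)(r := X)\<rparr>"
    and pos: "pos r' = pos (rob c r)"
    and hfin: "st (rob c r) = Finished \<Longrightarrow> st r' = Finished"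
    and hW: "\<And>t. Wt ports c t \<Longrightarrow> Wt ports c' t"
    and hppv: "\<And>i j. i < nr c' \<Longrightarrow> j < nr c' \<Longrightarrow> st (rob c' i) = Follower \<Longrightarrow> st (rob c' j) = Follower \<Longrightarrow>
        ppv ports c' i = ppv ports c' j \<Longrightarrow> i = j"
    and Omov: "\<And>k. X = Moving k \<Longrightarrow> col r' = Mov \<and> k < length (ports (pos r'))"
    and Ofin: "st r' = Finished \<Longrightarrow> col r' = Off \<and> notMoving c' r \<and>
        (\<forall>j<r. st (rob c j) = Finished) \<and> (Suc r < nr c \<longrightarrow> fin_ok ports c' r)"
    and Osn: "st r' = SNone \<Longrightarrow> Suc r = nr c \<and> col r' = Off \<and> notMoving c' r \<and>
        (\<forall>S. X = Looked S \<longrightarrow> (r = 0 \<longleftrightarrow> S (ports door ! 0) = {}))"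
    and Ofol: "st r' = Follower \<Longrightarrow> r \<noteq> 0 \<and> (\<forall>S. X = Looked S \<longrightarrow> FI ports c' r S)"
    and Olead: "st r' = Leader \<Longrightarrow> lead_ok ports c' r"
    and Opair: "Suc r < nr c \<Longrightarrow> st r' = Leader \<or> st r' = Follower \<Longrightarrow> pair_ok ports door c' r"
    and Oprev: "0 < r \<Longrightarrow> (st (rob c (r - 1)) = Leader \<or> st (rob c (r - 1)) = Follower \<longrightarrow> pair_ok ports door c' (r - 1)) \<and>
        (st (rob c (r - 1)) = Finished \<longrightarrow> fin_ok ports c' (r - 1))"
    and Onext: "Suc r < nr c \<Longrightarrow> (st (rob c (Suc r)) = Follower \<longrightarrow> (\<forall>S. ph c (Suc r) = Looked S \<longrightarrow> FI ports c' (Suc r) S)) \<and>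
        (st (rob c (Suc r)) = Leader \<longrightarrow> lead_ok ports c' (Suc r))"
  shows "binv V ports door c'"
proof -
  have n: "nr c' = nr c" using c' by simp
  have R: "\<And>i. rob c' i = (if i = r then r' else rob c i)" "\<And>i. ph c' i = (if i = r then X else ph c i)"
    using c' by auto
  have P: "\<And>i. pos (rob c' i) = pos (rob c i)" using R pos by simp
  have E: "empty_at c' = empty_at c" unfolding empty_at_def fun_eq_iff n P by simp
  show ?thesis
  proof (rule binvI)
    show "1 \<le> nr c'" using binv_nr[OF I] n by simp
    show "pos (rob c' (nr c' - 1)) = door" using binv_door[OF I] n P by simp
    show "\<forall>i<nr c'. \<forall>j<nr c'. pos (rob c' i) = pos (rob c' j) \<longrightarrow> i = j" using binv_inj[OF I] n P by simp
    show "\<And>i. i < nr c' \<Longrightarrow> pos (rob c' i) \<in> V" using binv_V[OF I] n P by simp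
    show "\<And>i k. i < nr c' \<Longrightarrow> ph c' i = Moving k \<Longrightarrow> col (rob c' i) = Mov \<and> k < length (ports (pos (rob c' i)))"
      using binv_mov[OF I] n R Omov by (auto split: if_splits)
    show "\<And>i. i < nr c' \<Longrightarrow> st (rob c' i) = Finished \<Longrightarrow> col (rob c' i) = Off \<and> notMoving c' i \<and>
        (\<forall>j<i. st (rob c' j) = Finished) \<and> (Suc i < nr c' \<longrightarrow> fin_ok ports c' i)"
    proof -
      fix i assume i: "i < nr c'" "st (rob c' i) = Finished"
      show "col (rob c' i) = Off \<and> notMoving c' i \<and> (\<forall>j<i. st (rob c' j) = Finished) \<and> (Suc i < nr c' \<longrightarrow> fin_ok ports c' i)"
      proof (cases "i = r")
        case True
        then show ?thesis using Ofin i R n by auto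
      next
        case False
        then have i': "i < nr c" "st (rob c i) = Finished" using i R n by auto
        note F = binv_fin[OF I i']
        have nm: "notMoving c' i" using F False R unfolding notMoving_def by auto
        have pre: "\<forall>j<i. st (rob c' j) = Finished" using F R hfin by auto
        have fo: "Suc i < nr c' \<longrightarrow> fin_ok ports c' i"
        proof
          assume si: "Suc i < nr c'"
          show "fin_ok ports c' i"
          proof (cases "Suc i = r")
            case True
            then have "r = Suc i" by simp
            then show ?thesis using Oprev i' by simp
          next
            case False
            then show ?thesis using F fin_ok_cong2[of c' i c ports] R \<open>i \<noteq> r\<close> si n by simp
          qed
        qed
        show ?thesis using F False R nm pre fo by simp
      qed
    qed
    show "\<And>i. i < nr c' \<Longrightarrow> st (rob c' i) = SNone \<Longrightarrow> Suc i = nr c' \<and> col (rob c' i) = Off \<and> notMoving c' i \<and>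
        (\<forall>S. ph c' i = Looked S \<longrightarrow> (i = 0 \<longleftrightarrow> S (ports door ! 0) = {}))"
    proof -
      fix i assume i: "i < nr c'" "st (rob c' i) = SNone"
      show "Suc i = nr c' \<and> col (rob c' i) = Off \<and> notMoving c' i \<and>
        (\<forall>S. ph c' i = Looked S \<longrightarrow> (i = 0 \<longleftrightarrow> S (ports door ! 0) = {}))"
      proof (cases "i = r")
        case True
        then show ?thesis using Osn i R n by auto
      next
        case False
        then have i': "i < nr c" "st (rob c i) = SNone" using i R n by auto
        show ?thesis using binv_snone[OF I i'] False R n unfolding notMoving_def by auto
      qed
    qed
    show "\<And>i. i < nr c' \<Longrightarrow> st (rob c' i) = Follower \<Longrightarrow> i \<noteq> 0 \<and> (\<forall>S. ph c' i = Looked S \<longrightarrow> FI ports c' i S)"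
    proof -
      fix i assume i: "i < nr c'" "st (rob c' i) = Follower"
      show "i \<noteq> 0 \<and> (\<forall>S. ph c' i = Looked S \<longrightarrow> FI ports c' i S)"
      proof (cases "i = r")
        case True
        then show ?thesis using Ofol i R n by auto
      next
        case False
        then have i': "i < nr c" "st (rob c i) = Follower" using i R n by auto
        note F = binv_fol[OF I i']
        show ?thesis
        proof (cases "i = Suc r")
          case True
          then show ?thesis using F Onext i' R by auto
        next
          case False
          then have "i - 1 \<noteq> r" using F by auto
          then have "FI ports c' i S = FI ports c i S" for S using FI_cong[of c' i c] R \<open>i \<noteq> r\<close> by simp
          then show ?thesis using F R \<open>i \<noteq> r\<close> by auto
        qed
      qed
    qed
    show "\<And>i. i < nr c' \<Longrightarrow> st (rob c' i) = Leader \<Longrightarrow> lead_ok ports c' i"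
    proof -
      fix i assume i: "i < nr c'" "st (rob c' i) = Leader"
      show "lead_ok ports c' i"
      proof (cases "i = r")
        case True
        then show ?thesis using Olead i R by auto
      next
        case False
        then have i': "i < nr c" "st (rob c i) = Leader" using i R n by auto
        note L = binv_lead[OF I i']
        show ?thesis
        proof (cases "i = Suc r")
          case True
          then show ?thesis using Onext i' by auto
        next
          case False
          then have "i - 1 \<noteq> r \<or> i = 0" by auto
          then show ?thesis using lead_ok_mono[OF L, of c'] R \<open>i \<noteq> r\<close> hW by auto
        qed
      qed
    qed
    show "\<And>i. Suc i < nr c' \<Longrightarrow> st (rob c' i) = Leader \<or> st (rob c' i) = Follower \<Longrightarrow> pair_ok ports door c' i"
    proof -
      fix i assume i: "Suc i < nr c'" "st (rob c' i) = Leader \<or> st (rob c' i) = Follower"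
      show "pair_ok ports door c' i"
      proof (cases "i = r")
        case True
        then show ?thesis using Opair i R n by auto
      next
        case False
        then have i': "Suc i < nr c" "st (rob c i) = Leader \<or> st (rob c i) = Follower" using i R n by auto
        show ?thesis
        proof (cases "Suc i = r")
          case True
          then have "r = Suc i" by simp
          then show ?thesis using Oprev i' by simp
        next
          case False
          then show ?thesis using binv_pair[OF I i'] pair_ok_cong2[of c' i c ports door] R \<open>i \<noteq> r\<close> E by simp
        qed
      qed
    qed
  qed (rule hppv)
qed


lemma Wt_keep:
  assumes "Wt ports c t" "rob c' = (rob c)(r := r')" "nr c' = nr c" "pos r' = pos (rob c r)"
    "st r' = Follower \<Longrightarrow> st (rob c r) = Follower \<and> pp r' = pp (rob c r)"
  shows "Wt ports c' t"
  using assms unfolding Wt_def empty_at_def ppv_def by (auto split: if_splits)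

lemma ppv_keep:
  assumes I: "binv V ports door c" and "rob c' = (rob c)(r := r')" "nr c' = nr c" "pos r' = pos (rob c r)"
    "st r' = Follower \<Longrightarrow> st (rob c r) = Follower \<and> pp r' = pp (rob c r)"
    "i < nr c'" "j < nr c'" "st (rob c' i) = Follower" "st (rob c' j) = Follower" "ppv ports c' i = ppv ports c' j"
  shows "i = j"
proof -
  have "ppv ports c' x = ppv ports c x" if "x < nr c'" "st (rob c' x) = Follower" for x
    using assms that unfolding ppv_def by (auto split: if_splits)
  moreover have "st (rob c x) = Follower" if "x < nr c'" "st (rob c' x) = Follower" for x
    using assms that by (auto split: if_splits)
  ultimately show ?thesis using binv_ppv[OF I] assms by (metis)
qed

lemma FI_prev_upd:
  assumes "FI ports c i S" "rob c' i = rob c i" "pos (rob c' (i - 1)) = pos (rob c (i - 1))"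
    "st (rob c (i - 1)) = Finished \<Longrightarrow> st (rob c' (i - 1)) = Finished"
    "is_dir (col (rob c (i - 1))) \<Longrightarrow> col (rob c (i - 1)) \<noteq> rcd (rob c i) \<Longrightarrow> col (rob c' (i - 1)) = col (rob c (i - 1))"
  shows "FI ports c' i S"
  using assms unfolding FI_def ppv_def by metis

lemma pair_ok_upd_p:
  assumes "pair_ok ports door c p" "rob c' (Suc p) = rob c (Suc p)" "ph c' (Suc p) = ph c (Suc p)"
    "pos (rob c' p) = pos (rob c p)" "sp (rob c' p) = sp (rob c p)" "notMoving c p" "ph c' p = Idle"
    "A1 c p \<Longrightarrow> A1 c' p" "empty_at c' = empty_at c"
  shows "pair_ok ports door c' p"
proof -
  have nm: "notMoving c' p" using assms(7) unfolding notMoving_def by simp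
  have na2: "\<not> A2 c p" using assms(6) unfolding A2_def notMoving_def by auto
  have E: "ppv ports c' (Suc p) = ppv ports c (Suc p)" "spv ports c' p = spv ports c p"
    using assms unfolding ppv_def spv_def by auto
  have fb: "fol_base ports c' (Suc p) = fol_base ports c (Suc p)" using assms(2) unfolding fol_base_def by simp
  have sp': "\<exists>s. sp (rob c' p) = Some s \<and> s < length (ports (pos (rob c' p)))"
    using assms(1,4,5) unfolding pair_ok_def by auto
  consider "snone_st ports door c p" | "fol_base ports c (Suc p)" "adj ports c p" | "fol_base ports c (Suc p)" "gap ports c p"
    using assms(1) unfolding pair_ok_def by blast
  then show ?thesis
  proof cases
    case 1
    then have "snone_st ports door c' p" using nm assms E unfolding snone_st_def by auto
    then show ?thesis using sp' unfolding pair_ok_def by blast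
  next
    case 2
    have "A0 ports c p \<or> A1 c p" using 2(2) na2 unfolding adj_def by auto
    then have "A0 ports c' p \<or> A1 c' p"
    proof
      assume "A0 ports c p"
      then show ?thesis using nm assms unfolding A0_def by auto
    qed (use assms in auto)
    then have "adj ports c' p" using 2(2) E assms unfolding adj_def notMoving_def by auto
    then show ?thesis using sp' fb 2(1) unfolding pair_ok_def by blast
  next
    case 3
    have "gap ports c' p" using 3(2) E nm assms unfolding gap_def Let_def by auto
    then show ?thesis using sp' fb 3(1) unfolding pair_ok_def by blast
  qed
qed

lemma leader_not_next:
  assumes I: "binv V ports door c" "Suc r < nr c" "st (rob c (Suc r)) = Leader"
  shows "st (rob c r) = Finished"
  using binv_lead[OF I(1) _ I(3)] I(2) unfolding lead_ok_def by simp


lemma leader_setcol: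
  assumes pg: "port_graph V ports door Delta" and I: "binv V ports door c"
    and r: "r < nr c" "ph c r = Looked S" "st (rob c r) = Leader" "\<not> is_dir (col (rob c r))"
    and C: "is_dir C" "\<And>k. C = Dir k \<Longrightarrow> k < length (ports (pos (rob c r))) \<and> Wt ports c (ports (pos (rob c r)) ! k)"
    and c': "c' = c\<lparr>rob := (rob c)(r := (rob c r)\<lparr>col := C\<rparr>), ph := (ph c)(r := Idle)\<rparr>"
  shows "binv V ports door c'"
proof -
  let ?r' = "(rob c r)\<lparr>col := C\<rparr>"
  have R: "rob c' = (rob c)(r := ?r')" "nr c' = nr c" "ph c' = (ph c)(r := Idle)" using c' by auto
  note L = binv_lead[OF I r(1) r(3)]
  have Wk: "\<And>t. Wt ports c t \<Longrightarrow> Wt ports c' t"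
    using Wt_keep[OF _ R(1) R(2)] r(3) by simp
  have E: "empty_at c' = empty_at c" using R unfolding empty_at_def by auto
  have nmr: "notMoving c r" using r(2) unfolding notMoving_def by simp
  show ?thesis
  proof (rule compute_frame[OF pg I r(1) c'])
    show "\<And>i j. i < nr c' \<Longrightarrow> j < nr c' \<Longrightarrow> st (rob c' i) = Follower \<Longrightarrow> st (rob c' j) = Follower \<Longrightarrow>
        ppv ports c' i = ppv ports c' j \<Longrightarrow> i = j"
      using ppv_keep[OF I R(1) R(2)] r(3) by simp
    show "\<And>t. Wt ports c t \<Longrightarrow> Wt ports c' t" by (rule Wk)
    show "lead_ok ports c' r"
      using L C Wk R unfolding lead_ok_def by (auto simp: is_dir_def)
    show "pair_ok ports door c' r" if "Suc r < nr c"
    proof (rule pair_ok_upd_p)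
      show "pair_ok ports door c r" using binv_pair[OF I that] r(3) by simp
      show "A1 c r \<Longrightarrow> A1 c' r" using r(4) unfolding A1_def by simp
    qed (use R nmr E in auto)
    show "(st (rob c (r - 1)) = Leader \<or> st (rob c (r - 1)) = Follower \<longrightarrow> pair_ok ports door c' (r - 1)) \<and>
        (st (rob c (r - 1)) = Finished \<longrightarrow> fin_ok ports c' (r - 1))" if "0 < r"
    proof -
      have "st (rob c (r - 1)) = Finished" using L that unfolding lead_ok_def by simp
      moreover have "fin_ok ports c' (r - 1)" unfolding fin_ok_def using R that r(3) by simp
      ultimately show ?thesis by simp
    qed
    show "(st (rob c (Suc r)) = Follower \<longrightarrow> (\<forall>S. ph c (Suc r) = Looked S \<longrightarrow> FI ports c' (Suc r) S)) \<and>
        (st (rob c (Suc r)) = Leader \<longrightarrow> lead_ok ports c' (Suc r))" if "Suc r < nr c"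
    proof (intro conjI impI allI)
      fix S' assume "st (rob c (Suc r)) = Follower" "ph c (Suc r) = Looked S'"
      then have "FI ports c (Suc r) S'" using binv_fol[OF I that] by simp
      then show "FI ports c' (Suc r) S'" by (rule FI_prev_upd) (use R r in auto)
    next
      assume "st (rob c (Suc r)) = Leader"
      then show "lead_ok ports c' (Suc r)" using leader_not_next[OF I that] r(3) by simp
    qed
  qed (use R r in auto)
qed


lemma idle_pres:
  assumes pg: "port_graph V ports door Delta" and I: "binv V ports door c"
    and r: "r < nr c" "ph c r = Looked S"
    and c': "c' = c\<lparr>rob := (rob c)(r := rob c r), ph := (ph c)(r := Idle)\<rparr>"
  shows "binv V ports door c'"
proof -
  have R: "rob c' = (rob c)(r := rob c r)" "nr c' = nr c" "ph c' = (ph c)(r := Idle)" using c' by auto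
  have R2: "rob c' = rob c" using R(1) by auto
  have Wk: "\<And>t. Wt ports c t \<Longrightarrow> Wt ports c' t"
    using Wt_keep[OF _ R(1) R(2)] by simp
  have E: "empty_at c' = empty_at c" using R unfolding empty_at_def by auto
  have nmr: "notMoving c r" using r(2) unfolding notMoving_def by simp
  have nm: "\<forall>i. notMoving c' i = notMoving c i" using R(3) r(2) unfolding notMoving_def by auto
  show ?thesis
  proof (rule compute_frame[OF pg I r(1) c'])
    show "\<And>i j. i < nr c' \<Longrightarrow> j < nr c' \<Longrightarrow> st (rob c' i) = Follower \<Longrightarrow> st (rob c' j) = Follower \<Longrightarrow>
        ppv ports c' i = ppv ports c' j \<Longrightarrow> i = j"
      using ppv_keep[OF I R(1) R(2)] by simp
    show "\<And>t. Wt ports c t \<Longrightarrow> Wt ports c' t" by (rule Wk)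
    show "st (rob c r) = Finished \<Longrightarrow> col (rob c r) = Off \<and> notMoving c' r \<and>
        (\<forall>j<r. st (rob c j) = Finished) \<and> (Suc r < nr c \<longrightarrow> fin_ok ports c' r)"
      using binv_fin[OF I r(1)] nm fin_ok_cong[OF R2 nm] by simp
    show "st (rob c r) = SNone \<Longrightarrow> Suc r = nr c \<and> col (rob c r) = Off \<and> notMoving c' r \<and>
        (\<forall>S. Idle = Looked S \<longrightarrow> (r = 0 \<longleftrightarrow> S (ports door ! 0) = {}))"
      using binv_snone[OF I r(1)] nm by simp
    show "st (rob c r) = Follower \<Longrightarrow> r \<noteq> 0 \<and> (\<forall>S. Idle = Looked S \<longrightarrow> FI ports c' r S)"
      using binv_fol[OF I r(1)] by simp
    show "st (rob c r) = Leader \<Longrightarrow> lead_ok ports c' r"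
      using binv_lead[OF I r(1)] Wk R2 R(3) unfolding lead_ok_def by auto
    show "pair_ok ports door c' r" if "Suc r < nr c" "st (rob c r) = Leader \<or> st (rob c r) = Follower"
    proof (rule pair_ok_upd_p)
      show "pair_ok ports door c r" using binv_pair[OF I that(1) that(2)] .
      show "A1 c r \<Longrightarrow> A1 c' r" using R2 unfolding A1_def by simp
    qed (use R R2 nmr E in auto)
    show "(st (rob c (r - 1)) = Leader \<or> st (rob c (r - 1)) = Follower \<longrightarrow> pair_ok ports door c' (r - 1)) \<and>
        (st (rob c (r - 1)) = Finished \<longrightarrow> fin_ok ports c' (r - 1))" if "0 < r"
    proof (intro conjI impI)
      assume "st (rob c (r - 1)) = Leader \<or> st (rob c (r - 1)) = Follower"
      then have "pair_ok ports door c (r - 1)" using binv_pair[OF I] that r(1) by simp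
      moreover have "\<forall>k. (ph c' (Suc (r - 1)) = Moving k) = (ph c (Suc (r - 1)) = Moving k)"
        using R(3) r(2) that by auto
      moreover have "ph c' (r - 1) = ph c (r - 1)" using R(3) that by auto
      ultimately show "pair_ok ports door c' (r - 1)" using pair_ok_cong[OF R2 R(2)] by simp
    next
      assume "st (rob c (r - 1)) = Finished"
      then have "fin_ok ports c (r - 1)" using binv_fin[OF I, of "r - 1"] that r(1) by simp
      then show "fin_ok ports c' (r - 1)" using fin_ok_cong[OF R2 nm] by simp
    qed
    show "(st (rob c (Suc r)) = Follower \<longrightarrow> (\<forall>S. ph c (Suc r) = Looked S \<longrightarrow> FI ports c' (Suc r) S)) \<and>
        (st (rob c (Suc r)) = Leader \<longrightarrow> lead_ok ports c' (Suc r))" if "Suc r < nr c"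
    proof (intro conjI impI allI)
      fix S' assume "st (rob c (Suc r)) = Follower" "ph c (Suc r) = Looked S'"
      then show "FI ports c' (Suc r) S'" using binv_fol[OF I that] FI_cong[of c' "Suc r" c] R2 by simp
    next
      assume "st (rob c (Suc r)) = Leader"
      then have "lead_ok ports c (Suc r)" using binv_lead[OF I that] by simp
      then show "lead_ok ports c' (Suc r)" by (rule lead_ok_mono) (use R2 R Wk in auto)
    qed
  qed (use R r in auto)
qed


lemma confirmed_A1:
  assumes I: "binv V ports door c" and p: "Suc p < nr c" "st (rob c p) = Leader \<or> st (rob c p) = Follower"
    "ph c p = Looked S" "succ_confirmed ports S (rob c p)"
  shows "fol_base ports c (Suc p) \<and> adj ports c p \<and> A1 c p"
proof -
  have P: "pair_ok ports door c p" using binv_pair[OF I p(1) p(2)] .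
  then obtain s where s: "sp (rob c p) = Some s" unfolding pair_ok_def by blast
  have nc: "\<not> nconf S (spv ports c p)" using p(4) s unfolding succ_confirmed_def nconf_def spv_def by auto
  have ns: "\<not> snone_st ports door c p" using nc p(3) unfolding snone_st_def by auto
  have ng: "\<not> gap ports c p" using nc p(3) unfolding gap_def Let_def by auto
  have fa: "fol_base ports c (Suc p)" "adj ports c p" using P ns ng unfolding pair_ok_def by auto
  moreover have "\<not> A0 ports c p" using nc p(3) fa(2) unfolding A0_def adj_def by auto
  moreover have "\<not> A2 c p" using p(3) unfolding A2_def by auto
  ultimately show ?thesis unfolding adj_def by blast
qed

lemma ppv_occ:
  assumes I: "binv V ports door c" and i: "i < nr c" "st (rob c i) = Follower"
    and j: "j < nr c" "ppv ports c i = pos (rob c j)"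
  shows "j = i - 1"
proof -
  note fc = fol_cases[OF I i]
  have si: "Suc (i - 1) = i" using fc by simp
  have "\<not> gap ports c (i - 1)" using j si unfolding gap_def Let_def empty_at_def by auto
  then have "ppv ports c i = pos (rob c (i - 1))" using fc unfolding adj_def by auto
  then show ?thesis using binv_inj[OF I] j i by auto
qed

lemma leader_move_pres:
  assumes pg: "port_graph V ports door Delta" and I: "binv V ports door c"
    and r: "r < nr c" "ph c r = Looked S" "st (rob c r) = Leader" "col (rob c r) = Dir k"
      "succ_confirmed ports S (rob c r)"
    and c': "c' = c\<lparr>rob := (rob c)(r := (rob c r)\<lparr>col := Mov\<rparr>), ph := (ph c)(r := Moving k)\<rparr>"
  shows "binv V ports door c'"
proof -
  let ?r' = "(rob c r)\<lparr>col := Mov\<rparr>"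
  have R: "rob c' = (rob c)(r := ?r')" "nr c' = nr c" "ph c' = (ph c)(r := Moving k)" using c' by auto
  note L = binv_lead[OF I r(1) r(3)]
  have Wk: "\<And>t. Wt ports c t \<Longrightarrow> Wt ports c' t"
    using Wt_keep[OF _ R(1) R(2)] r(3) by simp
  have kW: "k < length (ports (pos (rob c r)))" "Wt ports c (ports (pos (rob c r)) ! k)"
    using L r(4) unfolding lead_ok_def by auto
  have A: "fol_base ports c (Suc r) \<and> adj ports c r \<and> A1 c r" if "Suc r < nr c"
    using confirmed_A1[OF I that _ r(2) r(5)] r(3) by simp
  show ?thesis
  proof (rule compute_frame[OF pg I r(1) c'])
    show "\<And>i j. i < nr c' \<Longrightarrow> j < nr c' \<Longrightarrow> st (rob c' i) = Follower \<Longrightarrow> st (rob c' j) = Follower \<Longrightarrow>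
        ppv ports c' i = ppv ports c' j \<Longrightarrow> i = j"
      using ppv_keep[OF I R(1) R(2)] r(3) by simp
    show "\<And>t. Wt ports c t \<Longrightarrow> Wt ports c' t" by (rule Wk)
    show "lead_ok ports c' r"
      using L kW Wk R unfolding lead_ok_def by auto
    show "pair_ok ports door c' r" if "Suc r < nr c"
    proof -
      have P: "pair_ok ports door c r" using binv_pair[OF I that] r(3) by simp
      have a: "fol_base ports c (Suc r)" "adj ports c r" "A1 c r" using A[OF that] by auto
      have "A2 c' r" using a(3) R r(4) unfolding A1_def A2_def by auto
      then have "adj ports c' r" using a(2) R unfolding adj_def ppv_def spv_def notMoving_def by auto
      moreover have "fol_base ports c' (Suc r)" using a(1) R unfolding fol_base_def by auto
      moreover have "\<exists>s. sp (rob c' r) = Some s \<and> s < length (ports (pos (rob c' r)))" using P R unfolding pair_ok_def by auto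
      ultimately show ?thesis unfolding pair_ok_def by blast
    qed
    show "(st (rob c (r - 1)) = Leader \<or> st (rob c (r - 1)) = Follower \<longrightarrow> pair_ok ports door c' (r - 1)) \<and>
        (st (rob c (r - 1)) = Finished \<longrightarrow> fin_ok ports c' (r - 1))" if "0 < r"
    proof -
      have "st (rob c (r - 1)) = Finished" using L that unfolding lead_ok_def by simp
      moreover have "fin_ok ports c' (r - 1)" unfolding fin_ok_def using R that r(3) by simp
      ultimately show ?thesis by simp
    qed
    show "(st (rob c (Suc r)) = Follower \<longrightarrow> (\<forall>S. ph c (Suc r) = Looked S \<longrightarrow> FI ports c' (Suc r) S)) \<and>
        (st (rob c (Suc r)) = Leader \<longrightarrow> lead_ok ports c' (Suc r))" if "Suc r < nr c"
    proof (intro conjI impI allI)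
      fix S' assume "st (rob c (Suc r)) = Follower" "ph c (Suc r) = Looked S'"
      then have "FI ports c (Suc r) S'" using binv_fol[OF I that] by simp
      then show "FI ports c' (Suc r) S'" by (rule FI_prev_upd) (use R r A[OF that] in \<open>auto simp: A1_def\<close>)
    next
      assume "st (rob c (Suc r)) = Leader"
      then show "lead_ok ports c' (Suc r)" using leader_not_next[OF I that] r(3) by simp
    qed
  qed (use R r kW in auto)
qed

lemma leader_finish_pres:
  assumes pg: "port_graph V ports door Delta" and I: "binv V ports door c"
    and r: "r < nr c" "ph c r = Looked S" "st (rob c r) = Leader" "col (rob c r) = DStuck"
      "succ_confirmed ports S (rob c r)"
    and c': "c' = c\<lparr>rob := (rob c)(r := (rob c r)\<lparr>st := Finished, col := Off\<rparr>), ph := (ph c)(r := Idle)\<rparr>"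
  shows "binv V ports door c'"
proof -
  let ?r' = "(rob c r)\<lparr>st := Finished, col := Off\<rparr>"
  have R: "rob c' = (rob c)(r := ?r')" "nr c' = nr c" "ph c' = (ph c)(r := Idle)" using c' by auto
  note L = binv_lead[OF I r(1) r(3)]
  have Wk: "\<And>t. Wt ports c t \<Longrightarrow> Wt ports c' t"
    using Wt_keep[OF _ R(1) R(2)] r(3) by simp
  have A: "fol_base ports c (Suc r) \<and> adj ports c r \<and> A1 c r" if "Suc r < nr c"
    using confirmed_A1[OF I that _ r(2) r(5)] r(3) by simp
  show ?thesis
  proof (rule compute_frame[OF pg I r(1) c'])
    show "\<And>i j. i < nr c' \<Longrightarrow> j < nr c' \<Longrightarrow> st (rob c' i) = Follower \<Longrightarrow> st (rob c' j) = Follower \<Longrightarrow>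
        ppv ports c' i = ppv ports c' j \<Longrightarrow> i = j"
      using ppv_keep[OF I R(1) R(2)] r(3) by simp
    show "\<And>t. Wt ports c t \<Longrightarrow> Wt ports c' t" by (rule Wk)
    show "st ?r' = Finished \<Longrightarrow> col ?r' = Off \<and> notMoving c' r \<and>
        (\<forall>j<r. st (rob c j) = Finished) \<and> (Suc r < nr c \<longrightarrow> fin_ok ports c' r)"
    proof (intro conjI impI allI)
      show "notMoving c' r" using R unfolding notMoving_def by simp
    next
      fix j assume "j < r"
      show "st (rob c j) = Finished"
      proof (cases "j = r - 1")
        case True
        then show ?thesis using L \<open>j < r\<close> unfolding lead_ok_def by simp
      next
        case False
        have "st (rob c (r - 1)) = Finished" using L \<open>j < r\<close> unfolding lead_ok_def by simp
        then show ?thesis using binv_fin[OF I, of "r - 1"] False \<open>j < r\<close> r(1) by simp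
      qed
    next
      assume "Suc r < nr c"
      note a = A[OF this]
      have "rcd (rob c (Suc r)) = DStuck" "col (rob c (Suc r)) \<in> {Conf, Conf2}" "ppv ports c (Suc r) = pos (rob c r)"
        "notMoving c (Suc r)"
        using a r(4) unfolding A1_def adj_def by auto
      then show "fin_ok ports c' r" using a R unfolding fin_ok_def fol_base_def ppv_def notMoving_def by auto
    qed simp
    show "(st (rob c (r - 1)) = Leader \<or> st (rob c (r - 1)) = Follower \<longrightarrow> pair_ok ports door c' (r - 1)) \<and>
        (st (rob c (r - 1)) = Finished \<longrightarrow> fin_ok ports c' (r - 1))" if "0 < r"
    proof -
      have "st (rob c (r - 1)) = Finished" using L that unfolding lead_ok_def by simp
      moreover have "fin_ok ports c' (r - 1)" unfolding fin_ok_def using R that r(3) by simp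
      ultimately show ?thesis by simp
    qed
    show "(st (rob c (Suc r)) = Follower \<longrightarrow> (\<forall>S. ph c (Suc r) = Looked S \<longrightarrow> FI ports c' (Suc r) S)) \<and>
        (st (rob c (Suc r)) = Leader \<longrightarrow> lead_ok ports c' (Suc r))" if "Suc r < nr c"
    proof (intro conjI impI allI)
      fix S' assume "st (rob c (Suc r)) = Follower" "ph c (Suc r) = Looked S'"
      then have "FI ports c (Suc r) S'" using binv_fol[OF I that] by simp
      then show "FI ports c' (Suc r) S'" by (rule FI_prev_upd) (use R r A[OF that] in \<open>auto simp: A1_def\<close>)
    next
      assume "st (rob c (Suc r)) = Leader"
      then show "lead_ok ports c' (Suc r)" using leader_not_next[OF I that] r(3) by simp
    qed
  qed (use R r in auto)
qed



lemma none_leader_pres: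
  assumes pg: "port_graph V ports door Delta" and I: "binv V ports door c"
    and r: "r < nr c" "ph c r = Looked S" "st (rob c r) = SNone" "S (ports (pos (rob c r)) ! 0) = {}"
    and c': "c' = c\<lparr>rob := (rob c)(r := (rob c r)\<lparr>st := Leader, col := Mov\<rparr>), ph := (ph c)(r := Moving 0)\<rparr>"
  shows "binv V ports door c'"
proof -
  let ?r' = "(rob c r)\<lparr>st := Leader, col := Mov\<rparr>"
  have R: "rob c' = (rob c)(r := ?r')" "nr c' = nr c" "ph c' = (ph c)(r := Moving 0)" using c' by auto
  note SN = binv_snone[OF I r(1) r(3)]
  have pd: "pos (rob c r) = door" using SN binv_door[OF I] by (metis diff_Suc_1)
  have r0: "r = 0" using SN r(2) r(4) pd by simp
  have n1: "nr c = 1" using SN r0 by simp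
  have Wk: "\<And>t. Wt ports c t \<Longrightarrow> Wt ports c' t"
    using Wt_keep[OF _ R(1) R(2)] by simp
  have W0: "Wt ports c' (ports door ! 0)"
    unfolding Wt_def empty_at_def using R n1 r0 pd pg_door(2)[OF pg] by auto
  show ?thesis
  proof (rule compute_frame[OF pg I r(1) c'])
    show "\<And>i j. i < nr c' \<Longrightarrow> j < nr c' \<Longrightarrow> st (rob c' i) = Follower \<Longrightarrow> st (rob c' j) = Follower \<Longrightarrow>
        ppv ports c' i = ppv ports c' j \<Longrightarrow> i = j"
      using ppv_keep[OF I R(1) R(2)] by simp
    show "\<And>t. Wt ports c t \<Longrightarrow> Wt ports c' t" by (rule Wk)
    show "lead_ok ports c' r"
      using W0 R r0 pd unfolding lead_ok_def by auto
    show "\<And>k. Moving 0 = Moving k \<Longrightarrow> col ?r' = Mov \<and> k < length (ports (pos ?r'))"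
      using pd pg_door(1)[OF pg] by simp
  qed (use R r n1 r0 in auto)
qed



lemma none_follower_pres:
  assumes pg: "port_graph V ports door Delta" and I: "binv V ports door c"
    and r: "r < nr c" "ph c r = Looked S" "st (rob c r) = SNone" "S (ports (pos (rob c r)) ! 0) \<noteq> {}"
    and c': "c' = c\<lparr>rob := (rob c)(r := (rob c r)\<lparr>st := Follower, col := Off, pp := Some 0, rcd := Off\<rparr>), ph := (ph c)(r := Idle)\<rparr>"
  shows "binv V ports door c'"
proof -
  let ?r' = "(rob c r)\<lparr>st := Follower, col := Off, pp := Some 0, rcd := Off\<rparr>"
  have R: "rob c' = (rob c)(r := ?r')" "nr c' = nr c" "ph c' = (ph c)(r := Idle)" using c' by auto
  note SN = binv_snone[OF I r(1) r(3)]
  have pd: "pos (rob c r) = door" using SN binv_door[OF I] by (metis diff_Suc_1)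
  have r0: "r \<noteq> 0" using SN r(2) r(4) pd by simp
  have si: "Suc (r - 1) = r" using r0 by simp
  have lt: "r - 1 < nr c" using r by simp
  have sprev: "st (rob c (r - 1)) = Leader \<or> st (rob c (r - 1)) = Follower"
  proof (cases "st (rob c (r - 1))")
    case SNone then show ?thesis using binv_snone[OF I lt] SN si by simp
  next
    case Finished
    then have "fin_ok ports c (r - 1)" using binv_fin[OF I lt] si r(1) by simp
    then show ?thesis using r(3) si unfolding fin_ok_def fol_base_def by simp
  qed simp_all
  have P: "pair_ok ports door c (r - 1)" using binv_pair[OF I, of "r - 1"] si r(1) sprev by simp
  have sn: "snone_st ports door c (r - 1)" using P r(3) si unfolding pair_ok_def fol_base_def by auto
  have pr: "pos (rob c (r - 1)) = ports door ! 0" "spv ports c (r - 1) = door" "notMoving c (r - 1)"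
    "\<forall>S. ph c (r - 1) = Looked S \<longrightarrow> nconf S door"
    using sn unfolding snone_st_def by auto
  have ppvr: "ppv ports c' r = pos (rob c (r - 1))" using R pd pr unfolding ppv_def by simp
  have Wk: "\<And>t. Wt ports c t \<Longrightarrow> Wt ports c' t"
  proof -
    fix t assume W: "Wt ports c t"
    then have "t \<noteq> pos (rob c (r - 1))" using lt unfolding Wt_def empty_at_def by blast
    then show "Wt ports c' t" using W R ppvr unfolding Wt_def empty_at_def
      by (auto simp: ppv_def split: if_splits)
  qed
  show ?thesis
  proof (rule compute_frame[OF pg I r(1) c'])
    show "\<And>i j. i < nr c' \<Longrightarrow> j < nr c' \<Longrightarrow> st (rob c' i) = Follower \<Longrightarrow> st (rob c' j) = Follower \<Longrightarrow>
        ppv ports c' i = ppv ports c' j \<Longrightarrow> i = j"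
    proof -
      have oth: "x = r" if "x < nr c" "st (rob c' x) = Follower" "ppv ports c' x = ppv ports c' r" for x
      proof (rule ccontr)
        assume "x \<noteq> r"
        have x': "st (rob c x) = Follower" using that(2) \<open>x \<noteq> r\<close> R by simp
        have "ppv ports c' x = ppv ports c x" using \<open>x \<noteq> r\<close> R unfolding ppv_def by simp
        then have "ppv ports c x = pos (rob c (r - 1))" using that(3) ppvr by simp
        note x' this
        then have "r - 1 = x - 1" using ppv_occ[OF I that(1) _ lt] by simp
        moreover have "x \<noteq> 0" using binv_fol[OF I that(1) \<open>st (rob c x) = Follower\<close>] by simp
        ultimately show False using r0 \<open>x \<noteq> r\<close> by simp
      qed
      fix i j assume ij: "i < nr c'" "j < nr c'" "st (rob c' i) = Follower" "st (rob c' j) = Follower"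
        "ppv ports c' i = ppv ports c' j"
      show "i = j"
      proof (cases "i = r \<or> j = r")
        case True
        then show ?thesis
        proof
          assume ir: "i = r"
          have "ppv ports c' j = ppv ports c' r" using ij(5) ir by simp
          moreover have "j < nr c" using ij(2) R(2) by simp
          ultimately have "j = r" using oth ij(4) by blast
          then show ?thesis using ir by simp
        next
          assume jr: "j = r"
          have "ppv ports c' i = ppv ports c' r" using ij(5) jr by simp
          moreover have "i < nr c" using ij(1) R(2) by simp
          ultimately have "i = r" using oth ij(3) by blast
          then show ?thesis using jr by simp
        qed
      next
        case False
        then have ne: "i \<noteq> r" "j \<noteq> r" by auto
        have ri: "rob c' i = rob c i" using R(1) ne(1) by simp
        have rj: "rob c' j = rob c j" using R(1) ne(2) by simp
        have pi: "ppv ports c' i = ppv ports c i" by (simp only: ppv_def ri)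
        have pj: "ppv ports c' j = ppv ports c j" by (simp only: ppv_def rj)
        have si': "st (rob c i) = Follower" using ij(3) ri by simp
        have sj': "st (rob c j) = Follower" using ij(4) rj by simp
        have "i < nr c" "j < nr c" using ij(1,2) R(2) by auto
        then show ?thesis using binv_ppv[OF I _ _ si' sj'] ij(5) pi pj by simp
      qed
    qed
    show "\<And>t. Wt ports c t \<Longrightarrow> Wt ports c' t" by (rule Wk)
    show "(st (rob c (r - 1)) = Leader \<or> st (rob c (r - 1)) = Follower \<longrightarrow> pair_ok ports door c' (r - 1)) \<and>
        (st (rob c (r - 1)) = Finished \<longrightarrow> fin_ok ports c' (r - 1))"
    proof -
      have rr: "rob c' (r - 1) = rob c (r - 1)" "rob c' r = ?r'" "ph c' (r - 1) = ph c (r - 1)" "ph c' r = Idle"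
        using R r0 by auto
      have "fol_base ports c' r" using rr pd pg_door(1)[OF pg] unfolding fol_base_def by simp
      moreover have "adj ports c' (r - 1)"
        unfolding adj_def A0_def si using rr pr ppvr pd R unfolding spv_def notMoving_def by auto
      moreover have "\<exists>s. sp (rob c' (r - 1)) = Some s \<and> s < length (ports (pos (rob c' (r - 1))))"
        using P rr unfolding pair_ok_def by simp
      ultimately show ?thesis using sprev si unfolding pair_ok_def by auto
    qed
  qed (use R r SN r0 in auto)
qed



lemma follower_record_pres:
  assumes pg: "port_graph V ports door Delta" and I: "binv V ports door c"
    and r: "r < nr c" "ph c r = Looked S" "st (rob c r) = Follower" "pp (rob c r) = Some j"
      "x \<in> S (ports (pos (rob c r)) ! j)" "is_dir x" "x \<noteq> rcd (rob c r)"
    and c': "c' = c\<lparr>rob := (rob c)(r := (rob c r)\<lparr>rcd := x, col := (if is_dir (rcd (rob c r)) then Conf2 else Conf)\<rparr>),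
                    ph := (ph c)(r := Idle)\<rparr>"
  shows "binv V ports door c'"
proof -
  let ?r' = "(rob c r)\<lparr>rcd := x, col := (if is_dir (rcd (rob c r)) then Conf2 else Conf)\<rparr>"
  have R: "rob c' = (rob c)(r := ?r')" "nr c' = nr c" "ph c' = (ph c)(r := Idle)" using c' by auto
  note fc = fol_cases[OF I r(1) r(3)]
  have r0: "r \<noteq> 0" and si: "Suc (r - 1) = r" using fc by auto
  have lt: "r - 1 < nr c" using r by simp
  have FI: "FI ports c r S" using binv_fol[OF I r(1) r(3)] r(2) by simp
  have xe: "x \<in> S (ppv ports c r)" using r(4,5) unfolding ppv_def by simp
  have px: "pos (rob c (r - 1)) = ppv ports c r" "col (rob c (r - 1)) = x"
    using FI xe r(6,7) unfolding FI_def by auto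
  have nf: "st (rob c (r - 1)) \<noteq> Finished" using binv_fin[OF I lt] px r(6) by (auto simp: is_dir_def)
  then have sprev: "st (rob c (r - 1)) = Leader \<or> st (rob c (r - 1)) = Follower" and P: "pair_ok ports door c (r - 1)"
    and ag: "adj ports c (r - 1) \<or> gap ports c (r - 1)" using fc by auto
  have ng: "\<not> gap ports c (r - 1)" using px lt si unfolding gap_def Let_def empty_at_def by auto
  have ad: "adj ports c (r - 1)" using ag ng by simp
  have nA2: "\<not> A2 c (r - 1)"
  proof
    assume "A2 c (r - 1)"
    then obtain k where "ph c (r - 1) = Moving k" unfolding A2_def by auto
    then have "col (rob c (r - 1)) = Mov" using binv_mov[OF I lt] by simp
    then show False using px r(6) by (simp add: is_dir_def)
  qed
  have nA1: "\<not> A1 c (r - 1)" using px r(7) si unfolding A1_def by auto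
  have a0: "A0 ports c (r - 1)" using ad nA1 nA2 unfolding adj_def by auto
  have rc: "rcd (rob c r) = Off" "col (rob c r) \<in> {Off, Mov}" using a0 si unfolding A0_def by auto
  have Wk: "\<And>t. Wt ports c t \<Longrightarrow> Wt ports c' t"
    using Wt_keep[OF _ R(1) R(2)] by simp
  show ?thesis
  proof (rule compute_frame[OF pg I r(1) c'])
    show "\<And>i j. i < nr c' \<Longrightarrow> j < nr c' \<Longrightarrow> st (rob c' i) = Follower \<Longrightarrow> st (rob c' j) = Follower \<Longrightarrow>
        ppv ports c' i = ppv ports c' j \<Longrightarrow> i = j"
      using ppv_keep[OF I R(1) R(2)] r(3) by simp
    show "\<And>t. Wt ports c t \<Longrightarrow> Wt ports c' t" by (rule Wk)
    show "pair_ok ports door c' r" if "Suc r < nr c" "st ?r' = Leader \<or> st ?r' = Follower"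
    proof (rule pair_ok_upd_p)
      show "pair_ok ports door c r" using binv_pair[OF I that(1)] r(3) by simp
      show "A1 c r \<Longrightarrow> A1 c' r" using rc unfolding A1_def by (auto simp: is_dir_def)
      show "notMoving c r" using r(2) unfolding notMoving_def by simp
      show "empty_at c' = empty_at c" using R unfolding empty_at_def by auto
    qed (use R in auto)
    show "(st (rob c (r - 1)) = Leader \<or> st (rob c (r - 1)) = Follower \<longrightarrow> pair_ok ports door c' (r - 1)) \<and>
        (st (rob c (r - 1)) = Finished \<longrightarrow> fin_ok ports c' (r - 1))"
    proof -
      have rr: "rob c' (r - 1) = rob c (r - 1)" "rob c' r = ?r'" "ph c' (r - 1) = ph c (r - 1)" "ph c' r = Idle"
        using R r0 by auto
      have "fol_base ports c' r" using fc rr unfolding fol_base_def by simp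
      moreover have "adj ports c' (r - 1)"
      proof -
        have "A1 c' (r - 1)" using rr si px r(6) rc unfolding A1_def by simp
        then show ?thesis using ad rr si unfolding adj_def ppv_def spv_def notMoving_def by auto
      qed
      moreover have "\<exists>s. sp (rob c' (r - 1)) = Some s \<and> s < length (ports (pos (rob c' (r - 1))))"
        using P rr unfolding pair_ok_def by simp
      ultimately show ?thesis using sprev si unfolding pair_ok_def by auto
    qed
    show "(st (rob c (Suc r)) = Follower \<longrightarrow> (\<forall>S. ph c (Suc r) = Looked S \<longrightarrow> FI ports c' (Suc r) S)) \<and>
        (st (rob c (Suc r)) = Leader \<longrightarrow> lead_ok ports c' (Suc r))" if "Suc r < nr c"
    proof (intro conjI impI allI)
      fix S' assume "st (rob c (Suc r)) = Follower" "ph c (Suc r) = Looked S'"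
      then have "FI ports c (Suc r) S'" using binv_fol[OF I that] by simp
      then show "FI ports c' (Suc r) S'" by (rule FI_prev_upd) (use R r rc in \<open>auto simp: is_dir_def\<close>)
    next
      assume "st (rob c (Suc r)) = Leader"
      then show "lead_ok ports c' (Suc r)" using leader_not_next[OF I that] r(3) by simp
    qed
  qed (use R r r0 in auto)
qed



lemma follower_gap:
  assumes I: "binv V ports door c" and r: "r < nr c" "ph c r = Looked S" "st (rob c r) = Follower"
    "pp (rob c r) = Some j" "S (ports (pos (rob c r)) ! j) = {}"
  shows "r \<noteq> 0 \<and> Suc (r - 1) = r \<and> fol_base ports c r \<and> (st (rob c (r - 1)) = Leader \<or> st (rob c (r - 1)) = Follower) \<and>
    pair_ok ports door c (r - 1) \<and> gap ports c (r - 1) \<and> ppv ports c r = ports (pos (rob c r)) ! j"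
proof -
  note fc = fol_cases[OF I r(1) r(3)]
  have FI: "FI ports c r S" using binv_fol[OF I r(1) r(3)] r(2) by simp
  have pv: "ppv ports c r = ports (pos (rob c r)) ! j" using r(4) unfolding ppv_def by simp
  have ne: "ppv ports c r \<noteq> pos (rob c (r - 1))" using FI r(5) pv unfolding FI_def by simp
  have "\<not> adj ports c (r - 1)" using ne fc unfolding adj_def by auto
  then show ?thesis using fc ne pv by auto
qed

lemma follower_show_pres:
  assumes pg: "port_graph V ports door Delta" and I: "binv V ports door c"
    and r: "r < nr c" "ph c r = Looked S" "st (rob c r) = Follower" "pp (rob c r) = Some j"
      "S (ports (pos (rob c r)) ! j) = {}" "rcd (rob c r) = Dir d" "col (rob c r) \<noteq> Dir j"
    and c': "c' = c\<lparr>rob := (rob c)(r := (rob c r)\<lparr>col := Dir j\<rparr>), ph := (ph c)(r := Idle)\<rparr>"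
  shows "binv V ports door c'"
proof -
  let ?r' = "(rob c r)\<lparr>col := Dir j\<rparr>"
  have R: "rob c' = (rob c)(r := ?r')" "nr c' = nr c" "ph c' = (ph c)(r := Idle)" using c' by auto
  note G = follower_gap[OF I r(1-5)]
  have r0: "r \<noteq> 0" and si: "Suc (r - 1) = r" using G by auto
  have g: "gap ports c (r - 1)" using G by simp
  have cr: "col (rob c r) \<in> {Conf, Conf2}" using g si r(2,4,7) unfolding gap_def Let_def by auto
  have Wk: "\<And>t. Wt ports c t \<Longrightarrow> Wt ports c' t"
    using Wt_keep[OF _ R(1) R(2)] by simp
  have E: "empty_at c' = empty_at c" using R unfolding empty_at_def by auto
  show ?thesis
  proof (rule compute_frame[OF pg I r(1) c'])
    show "\<And>i j. i < nr c' \<Longrightarrow> j < nr c' \<Longrightarrow> st (rob c' i) = Follower \<Longrightarrow> st (rob c' j) = Follower \<Longrightarrow>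
        ppv ports c' i = ppv ports c' j \<Longrightarrow> i = j"
      using ppv_keep[OF I R(1) R(2)] r(3) by simp
    show "\<And>t. Wt ports c t \<Longrightarrow> Wt ports c' t" by (rule Wk)
    show "pair_ok ports door c' r" if "Suc r < nr c" "st ?r' = Leader \<or> st ?r' = Follower"
    proof (rule pair_ok_upd_p)
      show "pair_ok ports door c r" using binv_pair[OF I that(1)] r(3) by simp
      show "A1 c r \<Longrightarrow> A1 c' r" using cr unfolding A1_def by (auto simp: is_dir_def)
      show "notMoving c r" using r(2) unfolding notMoving_def by simp
    qed (use R E in auto)
    show "(st (rob c (r - 1)) = Leader \<or> st (rob c (r - 1)) = Follower \<longrightarrow> pair_ok ports door c' (r - 1)) \<and>
        (st (rob c (r - 1)) = Finished \<longrightarrow> fin_ok ports c' (r - 1))"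
    proof -
      have rr: "rob c' (r - 1) = rob c (r - 1)" "rob c' r = ?r'" "ph c' (r - 1) = ph c (r - 1)" "ph c' r = Idle"
        using R r0 by auto
      have pv: "ppv ports c' r = ppv ports c r" "spv ports c' (r - 1) = spv ports c (r - 1)"
        using rr unfolding ppv_def spv_def by auto
      have "fol_base ports c' r" using G rr unfolding fol_base_def by simp
      moreover have "gap ports c' (r - 1)"
        using g unfolding gap_def Let_def si pv E using rr r(4) unfolding notMoving_def by auto
      moreover have "\<exists>s. sp (rob c' (r - 1)) = Some s \<and> s < length (ports (pos (rob c' (r - 1))))"
        using G rr unfolding pair_ok_def by simp
      ultimately show ?thesis using G si unfolding pair_ok_def by auto
    qed
    show "(st (rob c (Suc r)) = Follower \<longrightarrow> (\<forall>S. ph c (Suc r) = Looked S \<longrightarrow> FI ports c' (Suc r) S)) \<and>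
        (st (rob c (Suc r)) = Leader \<longrightarrow> lead_ok ports c' (Suc r))" if "Suc r < nr c"
    proof (intro conjI impI allI)
      fix S' assume "st (rob c (Suc r)) = Follower" "ph c (Suc r) = Looked S'"
      then have "FI ports c (Suc r) S'" using binv_fol[OF I that] by simp
      then show "FI ports c' (Suc r) S'" by (rule FI_prev_upd) (use R r cr in \<open>auto simp: is_dir_def\<close>)
    next
      assume "st (rob c (Suc r)) = Leader"
      then show "lead_ok ports c' (Suc r)" using leader_not_next[OF I that] r(3) by simp
    qed
  qed (use R r r0 in auto)
qed

lemma follower_move_pres:
  assumes pg: "port_graph V ports door Delta" and I: "binv V ports door c"
    and r: "r < nr c" "ph c r = Looked S" "st (rob c r) = Follower" "pp (rob c r) = Some j"
      "S (ports (pos (rob c r)) ! j) = {}" "rcd (rob c r) = Dir d" "col (rob c r) = Dir j"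
      "succ_confirmed ports S (rob c r)"
    and c': "c' = c\<lparr>rob := (rob c)(r := (rob c r)\<lparr>col := Mov\<rparr>), ph := (ph c)(r := Moving j)\<rparr>"
  shows "binv V ports door c'"
proof -
  let ?r' = "(rob c r)\<lparr>col := Mov\<rparr>"
  have R: "rob c' = (rob c)(r := ?r')" "nr c' = nr c" "ph c' = (ph c)(r := Moving j)" using c' by auto
  note G = follower_gap[OF I r(1-5)]
  have r0: "r \<noteq> 0" and si: "Suc (r - 1) = r" using G by auto
  have g: "gap ports c (r - 1)" using G by simp
  have jl: "j < length (ports (pos (rob c r)))" using G r(4) unfolding fol_base_def by auto
  have Wk: "\<And>t. Wt ports c t \<Longrightarrow> Wt ports c' t"
    using Wt_keep[OF _ R(1) R(2)] by simp
  have E: "empty_at c' = empty_at c" using R unfolding empty_at_def by auto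
  have A: "fol_base ports c (Suc r) \<and> adj ports c r \<and> A1 c r" if "Suc r < nr c"
    using confirmed_A1[OF I that _ r(2) r(8)] r(3) by simp
  show ?thesis
  proof (rule compute_frame[OF pg I r(1) c'])
    show "\<And>i j. i < nr c' \<Longrightarrow> j < nr c' \<Longrightarrow> st (rob c' i) = Follower \<Longrightarrow> st (rob c' j) = Follower \<Longrightarrow>
        ppv ports c' i = ppv ports c' j \<Longrightarrow> i = j"
      using ppv_keep[OF I R(1) R(2)] r(3) by simp
    show "\<And>t. Wt ports c t \<Longrightarrow> Wt ports c' t" by (rule Wk)
    show "pair_ok ports door c' r" if "Suc r < nr c" "st ?r' = Leader \<or> st ?r' = Follower"
    proof -
      have P: "pair_ok ports door c r" using binv_pair[OF I that(1)] r(3) by simp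
      have a: "fol_base ports c (Suc r)" "adj ports c r" "A1 c r" using A[OF that(1)] by auto
      have rr: "rob c' r = ?r'" "rob c' (Suc r) = rob c (Suc r)" "ph c' r = Moving j" "ph c' (Suc r) = ph c (Suc r)"
        using R by auto
      have "A2 c' r" using a(3) rr r(7) unfolding A1_def A2_def by auto
      moreover have "ppv ports c' (Suc r) = ppv ports c (Suc r)" "spv ports c' r = spv ports c r"
        using rr unfolding ppv_def spv_def by auto
      ultimately have "adj ports c' r" using a(2) rr unfolding adj_def notMoving_def by auto
      moreover have "fol_base ports c' (Suc r)" using a(1) rr unfolding fol_base_def by auto
      moreover have "\<exists>s. sp (rob c' r) = Some s \<and> s < length (ports (pos (rob c' r)))" using P rr unfolding pair_ok_def by auto
      ultimately show ?thesis unfolding pair_ok_def by blast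
    qed
    show "(st (rob c (r - 1)) = Leader \<or> st (rob c (r - 1)) = Follower \<longrightarrow> pair_ok ports door c' (r - 1)) \<and>
        (st (rob c (r - 1)) = Finished \<longrightarrow> fin_ok ports c' (r - 1))"
    proof -
      have rr: "rob c' (r - 1) = rob c (r - 1)" "rob c' r = ?r'" "ph c' (r - 1) = ph c (r - 1)" "ph c' r = Moving j"
        using R r0 by auto
      have pv: "ppv ports c' r = ppv ports c r" "spv ports c' (r - 1) = spv ports c (r - 1)"
        using rr unfolding ppv_def spv_def by auto
      have "fol_base ports c' r" using G rr unfolding fol_base_def by simp
      moreover have "gap ports c' (r - 1)"
        using g unfolding gap_def Let_def si pv E using rr r(4) unfolding notMoving_def by auto
      moreover have "\<exists>s. sp (rob c' (r - 1)) = Some s \<and> s < length (ports (pos (rob c' (r - 1))))"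
        using G rr unfolding pair_ok_def by simp
      ultimately show ?thesis using G si unfolding pair_ok_def by auto
    qed
    show "(st (rob c (Suc r)) = Follower \<longrightarrow> (\<forall>S. ph c (Suc r) = Looked S \<longrightarrow> FI ports c' (Suc r) S)) \<and>
        (st (rob c (Suc r)) = Leader \<longrightarrow> lead_ok ports c' (Suc r))" if "Suc r < nr c"
    proof (intro conjI impI allI)
      fix S' assume "st (rob c (Suc r)) = Follower" "ph c (Suc r) = Looked S'"
      then have "FI ports c (Suc r) S'" using binv_fol[OF I that] by simp
      then show "FI ports c' (Suc r) S'" by (rule FI_prev_upd) (use R r A[OF that] in \<open>auto simp: A1_def\<close>)
    next
      assume "st (rob c (Suc r)) = Leader"
      then show "lead_ok ports c' (Suc r)" using leader_not_next[OF I that] r(3) by simp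
    qed
  qed (use R r r0 jl in auto)
qed

lemma promote_pres:
  assumes pg: "port_graph V ports door Delta" and I: "binv V ports door c"
    and r: "r < nr c" "ph c r = Looked S" "st (rob c r) = Follower" "pp (rob c r) = Some j"
      "rcd (rob c r) = DStuck" "Off \<in> S (ports (pos (rob c r)) ! j)"
    and c': "c' = c\<lparr>rob := (rob c)(r := (rob c r)\<lparr>st := Leader\<rparr>), ph := (ph c)(r := Idle)\<rparr>"
  shows "binv V ports door c'"
proof -
  let ?r' = "(rob c r)\<lparr>st := Leader\<rparr>"
  have R: "rob c' = (rob c)(r := ?r')" "nr c' = nr c" "ph c' = (ph c)(r := Idle)" using c' by auto
  note fc = fol_cases[OF I r(1) r(3)]
  have r0: "r \<noteq> 0" and si: "Suc (r - 1) = r" using fc by auto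
  have FI: "FI ports c r S" using binv_fol[OF I r(1) r(3)] r(2) by simp
  have pv: "ppv ports c r = ports (pos (rob c r)) ! j" using r(4) unfolding ppv_def by simp
  have pf: "st (rob c (r - 1)) = Finished" using FI r(5,6) pv unfolding FI_def by simp
  have cr: "col (rob c r) \<in> {Conf, Conf2}" using fc pf by auto
  have Wk: "\<And>t. Wt ports c t \<Longrightarrow> Wt ports c' t"
    using Wt_keep[OF _ R(1) R(2)] by simp
  have E: "empty_at c' = empty_at c" using R unfolding empty_at_def by auto
  show ?thesis
  proof (rule compute_frame[OF pg I r(1) c'])
    show "\<And>i j. i < nr c' \<Longrightarrow> j < nr c' \<Longrightarrow> st (rob c' i) = Follower \<Longrightarrow> st (rob c' j) = Follower \<Longrightarrow>
        ppv ports c' i = ppv ports c' j \<Longrightarrow> i = j"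
      using ppv_keep[OF I R(1) R(2)] by simp
    show "\<And>t. Wt ports c t \<Longrightarrow> Wt ports c' t" by (rule Wk)
    show "lead_ok ports c' r" using pf cr R unfolding lead_ok_def by auto
    show "pair_ok ports door c' r" if "Suc r < nr c" "st ?r' = Leader \<or> st ?r' = Follower"
    proof (rule pair_ok_upd_p)
      show "pair_ok ports door c r" using binv_pair[OF I that(1)] r(3) by simp
      show "A1 c r \<Longrightarrow> A1 c' r" using R unfolding A1_def by simp
      show "notMoving c r" using r(2) unfolding notMoving_def by simp
    qed (use R E in auto)
    show "(st (rob c (r - 1)) = Leader \<or> st (rob c (r - 1)) = Follower \<longrightarrow> pair_ok ports door c' (r - 1)) \<and>
        (st (rob c (r - 1)) = Finished \<longrightarrow> fin_ok ports c' (r - 1))"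
    proof -
      have "fin_ok ports c' (r - 1)" unfolding fin_ok_def si using R by simp
      then show ?thesis using pf by simp
    qed
    show "(st (rob c (Suc r)) = Follower \<longrightarrow> (\<forall>S. ph c (Suc r) = Looked S \<longrightarrow> FI ports c' (Suc r) S)) \<and>
        (st (rob c (Suc r)) = Leader \<longrightarrow> lead_ok ports c' (Suc r))" if "Suc r < nr c"
    proof (intro conjI impI allI)
      fix S' assume "st (rob c (Suc r)) = Follower" "ph c (Suc r) = Looked S'"
      then have "FI ports c (Suc r) S'" using binv_fol[OF I that] by simp
      then show "FI ports c' (Suc r) S'" by (rule FI_prev_upd) (use R r in auto)
    next
      assume "st (rob c (Suc r)) = Leader"
      then show "lead_ok ports c' (Suc r)" using leader_not_next[OF I that] r(3) by simp
    qed
  qed (use R r r0 in auto)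
qed

lemma rechoose_impossible:
  assumes I: "binv V ports door c" and r: "r < nr c" "ph c r = Looked S" "st (rob c r) = Leader"
    "col (rob c r) = Dir k" "S (ports (pos (rob c r)) ! k) \<noteq> {}"
  shows False
  using binv_lead[OF I r(1) r(3)] r unfolding lead_ok_def by auto


lemma comp_pres:
  assumes pg: "port_graph V ports door Delta" and I: "binv V ports door c"
    and r: "r < nr c" "ph c r = Looked S" and cp: "compute ports S (rob c r) r' mv"
  shows "binv V ports door (c\<lparr>rob := (rob c)(r := r'), ph := (ph c)(r := (case mv of None \<Rightarrow> Idle | Some k \<Rightarrow> Moving k))\<rparr>)"
proof -
  consider "block_rule ports S (rob c r) r' mv" | "r' = rob c r" "mv = None" using cp unfolding compute_def by blast
  then show ?thesis
  proof cases
    case 2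
    then show ?thesis using idle_pres[OF pg I r] by simp
  next
    case 1
    then show ?thesis
    proof cases
      case none_leader
      then show ?thesis using none_leader_pres[OF pg I r] by simp
    next
      case none_follower
      then show ?thesis using none_follower_pres[OF pg I r] by simp
    next
      case (leader_choose k)
      have L: "lead_ok ports c r" using binv_lead[OF I r(1)] leader_choose by simp
      have W: "Wt ports c (ports (pos (rob c r)) ! k)"
        using L r(2) leader_choose(4,5) unfolding lead_ok_def by blast
      have kl: "k < length (ports (pos (rob c r)))" using leader_choose(5) unfolding free_port_def by simp
      show ?thesis using leader_setcol[OF pg I r(1) r(2) leader_choose(3) leader_choose(4), of "Dir k"] W kl leader_choose(1,2)
        by (simp add: is_dir_def)
    next
      case leader_stuck
      then show ?thesis using leader_setcol[OF pg I r, of DStuck] by (simp add: is_dir_def)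
    next
      case (leader_move k)
      then show ?thesis using leader_move_pres[OF pg I r] by simp
    next
      case (leader_rechoose k k')
      then show ?thesis using rechoose_impossible[OF I r] by simp
    next
      case (leader_restuck k)
      then show ?thesis using rechoose_impossible[OF I r] by simp
    next
      case leader_finish
      then show ?thesis using leader_finish_pres[OF pg I r] by simp
    next
      case (follower_record j x)
      then show ?thesis using follower_record_pres[OF pg I r] by simp
    next
      case (follower_show j d)
      then show ?thesis using follower_show_pres[OF pg I r] by simp
    next
      case (follower_move j d)
      then show ?thesis using follower_move_pres[OF pg I r] by simp
    next
      case (follower_promote j)
      then show ?thesis using promote_pres[OF pg I r] by simp
    qed
  qed
qed


lemma moving_pair:
  assumes I: "binv V ports door c" and r: "r < nr c" "ph c r = Moving k" "Suc r < nr c"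
  shows "fol_base ports c (Suc r) \<and> adj ports c r \<and> rcd (rob c (Suc r)) = Dir k \<and> col (rob c (Suc r)) \<in> {Conf, Conf2}
    \<and> (st (rob c r) = Leader \<or> st (rob c r) = Follower)"
proof -
  have nm: "\<not> notMoving c r" using r(2) unfolding notMoving_def by auto
  have sr: "st (rob c r) = Leader \<or> st (rob c r) = Follower"
  proof (cases "st (rob c r)")
    case SNone then show ?thesis using binv_snone[OF I r(1)] nm by simp
  next
    case Finished then show ?thesis using binv_fin[OF I r(1)] nm by simp
  qed simp_all
  have P: "pair_ok ports door c r" using binv_pair[OF I r(3) sr] .
  have cm: "col (rob c r) = Mov" using binv_mov[OF I r(1) r(2)] by simp
  have "\<not> snone_st ports door c r" using nm unfolding snone_st_def by simp
  moreover have "\<not> gap ports c r" using nm unfolding gap_def Let_def by simp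
  ultimately have fa: "fol_base ports c (Suc r)" "adj ports c r" using P unfolding pair_ok_def by auto
  have "\<not> A0 ports c r" using nm unfolding A0_def by simp
  moreover have "\<not> A1 c r" using cm unfolding A1_def by (simp add: is_dir_def)
  ultimately have "A2 c r" using fa(2) unfolding adj_def by blast
  then show ?thesis using fa sr r(2) unfolding A2_def by auto
qed

lemma moving_facts:
  assumes pg: "port_graph V ports door Delta" and I: "binv V ports door c" and r: "r < nr c" "ph c r = Moving k"
  shows "col (rob c r) = Mov" "k < length (ports (pos (rob c r)))"
    "ports (pos (rob c r)) ! k \<in> set (ports (pos (rob c r)))" "ports (pos (rob c r)) ! k \<in> V"
    "pos (rob c r) \<in> V" "ports (pos (rob c r)) ! k \<noteq> pos (rob c r)"
    "empty_at c (ports (pos (rob c r)) ! k)"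
    "st (rob c r) = Leader \<and> Wt ports c (ports (pos (rob c r)) ! k) \<or>
     st (rob c r) = Follower \<and> r \<noteq> 0 \<and> Suc (r - 1) = r \<and> gap ports c (r - 1) \<and> pair_ok ports door c (r - 1) \<and>
       (st (rob c (r - 1)) = Leader \<or> st (rob c (r - 1)) = Follower) \<and> fol_base ports c r \<and>
       ppv ports c r = ports (pos (rob c r)) ! k \<and> k = the (pp (rob c r))"
proof -
  have mv: "col (rob c r) = Mov" "k < length (ports (pos (rob c r)))" using binv_mov[OF I r] by auto
  then show "col (rob c r) = Mov" "k < length (ports (pos (rob c r)))" by auto
  show win: "ports (pos (rob c r)) ! k \<in> set (ports (pos (rob c r)))" using mv by simp
  show uV: "pos (rob c r) \<in> V" using binv_V[OF I r(1)] .
  show "ports (pos (rob c r)) ! k \<in> V" using pg_nb(1)[OF pg uV win] .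
  have "pos (rob c r) \<notin> set (ports (pos (rob c r)))" using pg uV unfolding port_graph_def by blast
  then show "ports (pos (rob c r)) ! k \<noteq> pos (rob c r)" using win by force
  have nm: "\<not> notMoving c r" using r(2) unfolding notMoving_def by auto
  have F: "st (rob c r) = Leader \<and> Wt ports c (ports (pos (rob c r)) ! k) \<or>
     st (rob c r) = Follower \<and> r \<noteq> 0 \<and> Suc (r - 1) = r \<and> gap ports c (r - 1) \<and> pair_ok ports door c (r - 1) \<and>
       (st (rob c (r - 1)) = Leader \<or> st (rob c (r - 1)) = Follower) \<and> fol_base ports c r \<and>
       ppv ports c r = ports (pos (rob c r)) ! k \<and> k = the (pp (rob c r))"
  proof (cases "st (rob c r)")
    case SNone then show ?thesis using binv_snone[OF I r(1)] nm by simp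
  next
    case Finished then show ?thesis using binv_fin[OF I r(1)] nm by simp
  next
    case Leader
    then show ?thesis using binv_lead[OF I r(1)] r(2) unfolding lead_ok_def by simp
  next
    case Follower
    note fc = fol_cases[OF I r(1) Follower]
    have si: "Suc (r - 1) = r" using fc by simp
    have "\<not> adj ports c (r - 1)" using nm si unfolding adj_def by simp
    moreover have "\<not> (st (rob c (r - 1)) = Finished \<and> notMoving c r)" using nm by simp
    ultimately have g: "gap ports c (r - 1)" "pair_ok ports door c (r - 1)"
      "st (rob c (r - 1)) = Leader \<or> st (rob c (r - 1)) = Follower" using fc by auto
    have kp: "k = the (pp (rob c r))" using g(1) r(2) si unfolding gap_def Let_def by auto
    then have "ppv ports c r = ports (pos (rob c r)) ! k" unfolding ppv_def by simp
    then show ?thesis using Follower fc g si kp by auto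
  qed
  then show "st (rob c r) = Leader \<and> Wt ports c (ports (pos (rob c r)) ! k) \<or>
     st (rob c r) = Follower \<and> r \<noteq> 0 \<and> Suc (r - 1) = r \<and> gap ports c (r - 1) \<and> pair_ok ports door c (r - 1) \<and>
       (st (rob c (r - 1)) = Leader \<or> st (rob c (r - 1)) = Follower) \<and> fol_base ports c r \<and>
       ppv ports c r = ports (pos (rob c r)) ! k \<and> k = the (pp (rob c r))" .
  show "empty_at c (ports (pos (rob c r)) ! k)"
  proof (cases "st (rob c r) = Leader")
    case True
    then have "Wt ports c (ports (pos (rob c r)) ! k)" using F by auto
    then show ?thesis unfolding Wt_def by simp
  next
    case False
    then have "gap ports c (r - 1)" "Suc (r - 1) = r" "ppv ports c r = ports (pos (rob c r)) ! k" using F by auto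
    then show ?thesis unfolding gap_def Let_def by simp
  qed
qed


lemma leader_unique:
  assumes I: "binv V ports door c" and "i < nr c" "j < nr c" "st (rob c i) = Leader" "st (rob c j) = Leader"
  shows "i = j"
proof -
  have "i \<in> leaders c" "j \<in> leaders c" using assms unfolding leaders_def by auto
  moreover have "finite (leaders c)" unfolding leaders_def by simp
  moreover have "card (leaders c) \<le> 1" using inv_leaders[OF I] .
  ultimately show ?thesis by (metis card_le_Suc0_iff_eq One_nat_def)
qed

lemma pair_ok_cong3:
  assumes "pair_ok ports door c i" "rob c' i = rob c i" "rob c' (Suc i) = rob c (Suc i)" "ph c' i = ph c i"
    "ph c' (Suc i) = ph c (Suc i)"
    "empty_at c (ppv ports c (Suc i)) \<Longrightarrow> empty_at c' (ppv ports c (Suc i))"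
  shows "pair_ok ports door c' i"
proof -
  have E: "ppv ports c' (Suc i) = ppv ports c (Suc i)" "spv ports c' i = spv ports c i"
    using assms(2,3) unfolding ppv_def spv_def by auto
  have nm: "notMoving c' i = notMoving c i" "notMoving c' (Suc i) = notMoving c (Suc i)"
    using assms(4,5) unfolding notMoving_def by auto
  have sn: "snone_st ports door c' i = snone_st ports door c i"
    unfolding snone_st_def using E nm assms(2-5) by simp
  have fb: "fol_base ports c' (Suc i) = fol_base ports c (Suc i)" unfolding fol_base_def using assms(3) by simp
  have ad: "adj ports c' i = adj ports c i"
    unfolding adj_def A0_def A1_def A2_def using E nm assms(2-5) by simp
  have gp: "gap ports c i \<Longrightarrow> gap ports c' i"
    unfolding gap_def Let_def using E nm assms(2-6) by simp
  show ?thesis using assms(1) sn fb ad gp assms(2) unfolding pair_ok_def by auto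
qed


lemma arrive_simps:
  "pos (arrive ports r k) = ports (pos r) ! k"
  "st (arrive ports r k) = st r"
  "col (arrive ports r k) = col r"
  "rcd (arrive ports r k) = Off"
  "sp (arrive ports r k) = Some (port_of ports (ports (pos r) ! k) (pos r))"
  "rcd r = Dir d \<Longrightarrow> st r = Follower \<Longrightarrow> pp (arrive ports r k) = Some d"
  unfolding arrive_def Let_def by auto

lemma pair_ok_cong4:
  assumes "pair_ok ports door c i" "rob c' i = rob c i" "rob c' (Suc i) = rob c (Suc i)" "ph c' i = ph c i"
    "ph c' (Suc i) = ph c (Suc i)"
    "gap ports c i \<Longrightarrow> fol_base ports c (Suc i) \<Longrightarrow> empty_at c' (ppv ports c (Suc i))"
  shows "pair_ok ports door c' i"
proof -
  have E: "ppv ports c' (Suc i) = ppv ports c (Suc i)" "spv ports c' i = spv ports c i"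
    using assms(2,3) unfolding ppv_def spv_def by auto
  have nm: "notMoving c' i = notMoving c i" "notMoving c' (Suc i) = notMoving c (Suc i)"
    using assms(4,5) unfolding notMoving_def by auto
  have sn: "snone_st ports door c' i = snone_st ports door c i"
    unfolding snone_st_def using E nm assms(2-5) by simp
  have fb: "fol_base ports c' (Suc i) = fol_base ports c (Suc i)" unfolding fol_base_def using assms(3) by simp
  have ad: "adj ports c' i = adj ports c i"
    unfolding adj_def A0_def A1_def A2_def using E nm assms(2-5) by simp
  have gp: "gap ports c i \<Longrightarrow> fol_base ports c (Suc i) \<Longrightarrow> gap ports c' i"
  proof -
    assume g: "gap ports c i" and fb0: "fol_base ports c (Suc i)"
    have "empty_at c' (ppv ports c (Suc i))" using assms(6)[OF g fb0] .
    then show "gap ports c' i" using g unfolding gap_def Let_def using E nm assms(2-5) by simp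
  qed
  show ?thesis using assms(1) sn fb ad gp assms(2) unfolding pair_ok_def by auto
qed

lemma arrive_pres:
  assumes pg: "port_graph V ports door Delta" and I: "binv V ports door c"
    and r: "r < nr c" "ph c r = Moving k"
    and n': "nr c' = nr c \<or> nr c' = Suc (nr c)"
    and R': "\<And>i. i < nr c \<Longrightarrow> rob c' i = (if i = r then arrive ports (rob c r) k else rob c i)"
    and P': "\<And>i. i < nr c \<Longrightarrow> ph c' i = (if i = r then Idle else ph c i)"
    and D: "nr c' = Suc (nr c) \<Longrightarrow> pos (rob c r) = door \<and> rob c' (nr c) = new_robot door \<and> ph c' (nr c) = Idle"
    and ND: "nr c' = nr c \<Longrightarrow> pos (rob c r) \<noteq> door"
  shows "binv V ports door c'"
proof -
  define n where "n = nr c"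
  define u where "u = pos (rob c r)"
  define w where "w = ports u ! k"
  define A where "A = arrive ports (rob c r) k"
  note MF = moving_facts[OF pg I r, folded u_def, folded w_def]
  have inj: "\<forall>i<nr c. \<forall>j<nr c. pos (rob c i) = pos (rob c j) \<longrightarrow> i = j" using binv_inj[OF I] .
  have rA: "rob c' r = A" using R'[OF r(1)] A_def by simp
  have rO: "\<And>i. i < n \<Longrightarrow> i \<noteq> r \<Longrightarrow> rob c' i = rob c i" using R' n_def by simp
  have pA: "ph c' r = Idle" using P'[OF r(1)] by simp
  have pO: "\<And>i. i < n \<Longrightarrow> i \<noteq> r \<Longrightarrow> ph c' i = ph c i" using P' n_def by simp
  have As: "pos A = w" "st A = st (rob c r)" "col A = Mov" "rcd A = Off" "sp A = Some (port_of ports w u)"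
    using arrive_simps[where ports=ports and r="rob c r" and k=k] MF(1) unfolding A_def w_def u_def by auto
  have po: "port_of ports w u < length (ports w)" "ports w ! port_of ports w u = u"
    using pg_port_of[OF pg MF(5) MF(3)] by auto
  have nd: "pos (rob c (n - 1)) = door" using binv_door[OF I] n_def by simp
  have n1: "n \<ge> 1" using binv_nr[OF I] n_def by simp
  have rlt: "r < n" using r n_def by simp
  have DD: "nr c' = Suc n \<Longrightarrow> r = n - 1 \<and> u = door \<and> rob c' n = new_robot door \<and> ph c' n = Idle"
  proof -
    assume a: "nr c' = Suc n"
    then have "u = door" "rob c' n = new_robot door" "ph c' n = Idle" using D n_def u_def by auto
    moreover have "r = n - 1" using inj rlt n1 nd \<open>u = door\<close> unfolding u_def n_def
      by (metis diff_less zero_less_one less_le_trans)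
    ultimately show "r = n - 1 \<and> u = door \<and> rob c' n = new_robot door \<and> ph c' n = Idle" by simp
  qed
  have NN: "nr c' = n \<Longrightarrow> Suc r < n"
  proof -
    assume "nr c' = n"
    then have "u \<noteq> door" using ND n_def u_def by simp
    then have "r \<noteq> n - 1" using nd u_def by auto
    then show "Suc r < n" using rlt by simp
  qed
  have wd: "w \<noteq> door"
  proof
    assume "w = door"
    moreover have "n - 1 < nr c" using n1 n_def by simp
    ultimately show False using MF(7) nd unfolding empty_at_def by blast
  qed
  have stR: "st (rob c r) = Leader \<or> st (rob c r) = Follower" using MF(8) by auto
  have posc: "\<And>i. i < nr c' \<Longrightarrow> pos (rob c' i) = (if i = r then w else if i < n then pos (rob c i) else door)"
  proof -
    fix i assume i: "i < nr c'"
    show "pos (rob c' i) = (if i = r then w else if i < n then pos (rob c i) else door)"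
    proof (cases "i < n")
      case True
      then show ?thesis using rA rO As by auto
    next
      case False
      then have "i = n" "nr c' = Suc n" using i n' n_def by auto
      then show ?thesis using DD rlt by (simp add: new_robot_def)
    qed
  qed
  have Emp: "\<And>x. empty_at c x \<Longrightarrow> x \<noteq> w \<Longrightarrow> (nr c' = Suc n \<Longrightarrow> x \<noteq> door) \<Longrightarrow> empty_at c' x"
  proof -
    fix x assume a: "empty_at c x" "x \<noteq> w" "nr c' = Suc n \<Longrightarrow> x \<noteq> door"
    show "empty_at c' x" unfolding empty_at_def
    proof (intro allI impI)
      fix j assume j: "j < nr c'"
      show "pos (rob c' j) \<noteq> x"
      proof (cases "j < n")
        case True
        then show ?thesis using posc[OF j] a(1,2) unfolding empty_at_def n_def by auto
      next
        case False
        then have "nr c' = Suc n" using j n' n_def by auto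
        then show ?thesis using posc[OF j] False a(3) rlt by auto
      qed
    qed
  qed
  have Eu: "nr c' = n \<Longrightarrow> empty_at c' u"
  proof -
    assume a: "nr c' = n"
    show "empty_at c' u" unfolding empty_at_def
    proof (intro allI impI)
      fix j assume j: "j < nr c'"
      then have jn: "j < n" using a by simp
      show "pos (rob c' j) \<noteq> u"
      proof (cases "j = r")
        case True
        then show ?thesis using posc[OF j] MF(6) by simp
      next
        case False
        then show ?thesis using posc[OF j] jn inj rlt unfolding u_def n_def by auto
      qed
    qed
  qed
  have FOL: "st (rob c r) = Follower \<Longrightarrow> r \<noteq> 0 \<and> Suc (r - 1) = r \<and> gap ports c (r - 1) \<and> pair_ok ports door c (r - 1) \<and>
       (st (rob c (r - 1)) = Leader \<or> st (rob c (r - 1)) = Follower) \<and> fol_base ports c r \<and>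
       ppv ports c r = w \<and> k = the (pp (rob c r))" using MF(8) by auto
  have LEA: "st (rob c r) = Leader \<Longrightarrow> Wt ports c w" using MF(8) by auto
  have FOL2: "\<exists>d. rcd (rob c r) = Dir d \<and> d < length (ports w) \<and> ports w ! d = pos (rob c (r - 1)) \<and>
      spv ports c (r - 1) = w \<and> notMoving c (r - 1) \<and> (\<forall>S. ph c (r - 1) = Looked S \<longrightarrow> nconf S w)"
    if "st (rob c r) = Follower"
  proof -
    note F = FOL[OF that]
    have "gap ports c (r - 1)" "Suc (r - 1) = r" "ppv ports c r = w" using F by auto
    then show ?thesis unfolding gap_def Let_def by auto
  qed
  have ppvA: "ppv ports c' r = pos (rob c (r - 1))" "pp A \<noteq> None" "the (pp A) < length (ports w)"
    if fr0: "st (rob c r) = Follower"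
  proof -
    obtain d where d: "rcd (rob c r) = Dir d" "d < length (ports w)" "ports w ! d = pos (rob c (r - 1))"
      using FOL2[OF fr0] by blast
    have "pp A = Some d" using arrive_simps(6)[OF d(1) fr0] unfolding A_def .
    then show "ppv ports c' r = pos (rob c (r - 1))" "pp A \<noteq> None" "the (pp A) < length (ports w)"
      unfolding ppv_def using rA As d by auto
  qed
  have stc: "\<And>i. i < n \<Longrightarrow> st (rob c' i) = st (rob c i)" using rA rO As by (metis)
  have WK: "\<And>t. Wt ports c t \<Longrightarrow> st (rob c r) = Follower \<Longrightarrow> Wt ports c' t"
  proof -
    fix t assume W: "Wt ports c t" and fr: "st (rob c r) = Follower"
    have tw: "t \<noteq> w" using W FOL[OF fr] rlt fr unfolding Wt_def n_def by auto
    have td: "nr c' = Suc n \<Longrightarrow> t \<noteq> door" using W DD rlt unfolding Wt_def empty_at_def n_def u_def by auto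
    have E: "empty_at c' t" using Emp[OF _ tw td] W unfolding Wt_def by blast
    have "ppv ports c' j \<noteq> t" if j: "j < nr c'" "st (rob c' j) = Follower" for j
    proof -
      have jn: "j < n"
      proof (rule ccontr)
        assume "\<not> j < n"
        then have "j = n" "nr c' = Suc n" using j n' n_def by auto
        then show False using DD j by (simp add: new_robot_def)
      qed
      show ?thesis
      proof (cases "j = r")
        case True
        then show ?thesis using ppvA(1)[OF fr] W rlt unfolding Wt_def empty_at_def n_def by auto
      next
        case False
        then have "ppv ports c' j = ppv ports c j" "st (rob c j) = Follower" using rO[OF jn False] j(2) unfolding ppv_def by auto
        then show ?thesis using W jn unfolding Wt_def n_def by auto
      qed
    qed
    then show "Wt ports c' t" using E unfolding Wt_def by blast
  qed
  have lt_n: "\<And>i. i < nr c' \<Longrightarrow> st (rob c' i) \<noteq> SNone \<Longrightarrow> i < n"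
  proof -
    fix i assume i: "i < nr c'" "st (rob c' i) \<noteq> SNone"
    show "i < n"
    proof (rule ccontr)
      assume "\<not> i < n"
      then have "i = n" "nr c' = Suc n" using i n' n_def by auto
      then show False using DD i by (simp add: new_robot_def)
    qed
  qed
  show ?thesis
  proof (rule binvI)
    show "1 \<le> nr c'" using n' n1 n_def by auto
    show "pos (rob c' (nr c' - 1)) = door"
    proof (cases "nr c' = n")
      case True
      then have "nr c' - 1 \<noteq> r" "nr c' - 1 < n" using NN n1 by auto
      then show ?thesis using posc[of "nr c' - 1"] True nd n1 by auto
    next
      case False
      then have "nr c' = Suc n" using n' n_def by auto
      then show ?thesis using posc[of n] DD rlt by auto
    qed
    show "\<forall>i<nr c'. \<forall>j<nr c'. pos (rob c' i) = pos (rob c' j) \<longrightarrow> i = j"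
    proof (intro allI impI)
      fix i j assume i: "i < nr c'" and j: "j < nr c'" and eq: "pos (rob c' i) = pos (rob c' j)"
      have occ: "x < n \<Longrightarrow> x \<noteq> r \<Longrightarrow> pos (rob c x) \<noteq> w" for x using MF(7) unfolding empty_at_def n_def by auto
      have occd: "x < n \<Longrightarrow> x \<noteq> r \<Longrightarrow> nr c' = Suc n \<Longrightarrow> pos (rob c x) \<noteq> door" for x
        using DD inj rlt nd unfolding n_def u_def by metis
      have big: "x < nr c' \<Longrightarrow> \<not> x < n \<Longrightarrow> nr c' = Suc n \<and> x = n" for x using n' n_def by auto
      show "i = j"
        using eq posc[OF i] posc[OF j] occ occd big[OF i] big[OF j] wd inj rlt unfolding n_def
        by (auto split: if_splits)
    qed
    show "\<And>i. i < nr c' \<Longrightarrow> pos (rob c' i) \<in> V"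
    proof -
      fix i assume i: "i < nr c'"
      show "pos (rob c' i) \<in> V" using posc[OF i] MF(4) binv_V[OF I] pg_door(3)[OF pg] n_def by auto
    qed
    show "\<And>i k. i < nr c' \<Longrightarrow> ph c' i = Moving k \<Longrightarrow> col (rob c' i) = Mov \<and> k < length (ports (pos (rob c' i)))"
    proof -
      fix i k' assume i: "i < nr c'" and m: "ph c' i = Moving k'"
      have "i < n"
      proof (rule ccontr)
        assume "\<not> i < n"
        then have "i = n" "nr c' = Suc n" using i n' n_def by auto
        then show False using DD m by simp
      qed
      moreover have "i \<noteq> r" using m pA by auto
      ultimately show "col (rob c' i) = Mov \<and> k' < length (ports (pos (rob c' i)))"
        using binv_mov[OF I, of i k'] m rO pO n_def by auto
    qed
    show "\<And>i. i < nr c' \<Longrightarrow> st (rob c' i) = Finished \<Longrightarrow> col (rob c' i) = Off \<and> notMoving c' i \<and>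
        (\<forall>j<i. st (rob c' j) = Finished) \<and> (Suc i < nr c' \<longrightarrow> fin_ok ports c' i)"
    proof -
      fix i assume i: "i < nr c'" "st (rob c' i) = Finished"
      have iN: "i < n" using lt_n[OF i(1)] i(2) by simp
      have ir: "i \<noteq> r" using i(2) rA As stR by auto
      have ri: "rob c' i = rob c i" "ph c' i = ph c i" using rO[OF iN ir] pO[OF iN ir] by auto
      have F: "col (rob c i) = Off \<and> notMoving c i \<and> (\<forall>j<i. st (rob c j) = Finished) \<and> (Suc i < nr c \<longrightarrow> fin_ok ports c i)"
        using binv_fin[OF I] iN i(2) ri n_def by simp
      have pre: "\<forall>j<i. st (rob c' j) = Finished" using F stc iN by auto
      have fo: "fin_ok ports c' i" if si: "Suc i < nr c'"
      proof -
        have sin: "Suc i < n"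
        proof (rule ccontr)
          assume "\<not> Suc i < n"
          then have "Suc i = n" "nr c' = Suc n" using si n' iN n_def by auto
          then show False using DD ir by simp
        qed
        have fc: "fin_ok ports c i" using F sin n_def by simp
        show ?thesis
        proof (cases "Suc i = r")
          case True
          have "st (rob c r) = Leader"
          proof -
            have "\<not> notMoving c r" using r(2) unfolding notMoving_def by auto
            then show ?thesis using fc True stR unfolding fin_ok_def by auto
          qed
          then show ?thesis unfolding fin_ok_def using True rA As by simp
        next
          case False
          have "rob c' (Suc i) = rob c (Suc i)" "ph c' (Suc i) = ph c (Suc i)" using rO[OF sin False] pO[OF sin False] by auto
          then show ?thesis using fc fin_ok_cong2[of c' i c ports] ri by simp
        qed
      qed
      show "col (rob c' i) = Off \<and> notMoving c' i \<and> (\<forall>j<i. st (rob c' j) = Finished) \<and> (Suc i < nr c' \<longrightarrow> fin_ok ports c' i)"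
        using F ri pre fo unfolding notMoving_def by auto
    qed
    show "\<And>i. i < nr c' \<Longrightarrow> st (rob c' i) = SNone \<Longrightarrow> Suc i = nr c' \<and> col (rob c' i) = Off \<and> notMoving c' i \<and>
        (\<forall>S. ph c' i = Looked S \<longrightarrow> (i = 0 \<longleftrightarrow> S (ports door ! 0) = {}))"
    proof -
      fix i assume i: "i < nr c'" "st (rob c' i) = SNone"
      show "Suc i = nr c' \<and> col (rob c' i) = Off \<and> notMoving c' i \<and>
        (\<forall>S. ph c' i = Looked S \<longrightarrow> (i = 0 \<longleftrightarrow> S (ports door ! 0) = {}))"
      proof (cases "i < n")
        case False
        then have "i = n" "nr c' = Suc n" using i n' n_def by auto
        then show ?thesis using DD unfolding notMoving_def by (simp add: new_robot_def)
      next
        case True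
        have ir: "i \<noteq> r" using i(2) rA As stR by auto
        have ri: "rob c' i = rob c i" "ph c' i = ph c i" using rO[OF True ir] pO[OF True ir] by auto
        have S: "Suc i = n" "col (rob c i) = Off" "notMoving c i"
          "\<forall>S. ph c i = Looked S \<longrightarrow> (i = 0 \<longleftrightarrow> S (ports door ! 0) = {})"
          using binv_snone[OF I, of i] True i(2) ri n_def by auto
        have "nr c' = n"
        proof (rule ccontr)
          assume "nr c' \<noteq> n"
          then have "nr c' = Suc n" using n' n_def by auto
          then show False using DD S(1) ir by simp
        qed
        then show ?thesis using S ri unfolding notMoving_def by auto
      qed
    qed
    show "\<And>i. i < nr c' \<Longrightarrow> st (rob c' i) = Follower \<Longrightarrow> i \<noteq> 0 \<and> (\<forall>S. ph c' i = Looked S \<longrightarrow> FI ports c' i S)"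
    proof -
      fix i assume i: "i < nr c'" "st (rob c' i) = Follower"
      have iN: "i < n" using lt_n[OF i(1)] i(2) by simp
      have sF: "st (rob c i) = Follower" using stc[OF iN] i(2) by simp
      have F: "i \<noteq> 0 \<and> (\<forall>S. ph c i = Looked S \<longrightarrow> FI ports c i S)" using binv_fol[OF I _ sF] iN n_def by simp
      have "FI ports c' i S" if L: "ph c' i = Looked S" for S
      proof -
        have ir: "i \<noteq> r" using L pA by auto
        have phi: "ph c' i = ph c i" using pO[OF iN ir] .
        have FI: "FI ports c i S" using F L phi by simp
        show ?thesis
        proof (cases "i = Suc r")
          case True
          have sr: "Suc r < n" using True iN by simp
          note MP = moving_pair[OF I r sr[unfolded n_def]]
          have pv: "ppv ports c (Suc r) = u" using MP unfolding adj_def u_def by simp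
          have ri: "rob c' (Suc r) = rob c (Suc r)" using rO[OF sr] by simp
          have pv': "ppv ports c' (Suc r) = u" using pv ri unfolding ppv_def by simp
          have cr: "col (rob c r) = Mov" using MF(1) .
          show ?thesis unfolding FI_def True pv' using FI unfolding FI_def True pv
            using rA As ri MF(6) cr by (auto simp: is_dir_def)
        next
          case False
          then have "i - 1 \<noteq> r" using F by auto
          moreover have "i - 1 < n" using iN by simp
          ultimately have "rob c' (i - 1) = rob c (i - 1)" using rO by simp
          then show ?thesis using FI FI_cong[of c' i c] rO[OF iN ir] by simp
        qed
      qed
      then show "i \<noteq> 0 \<and> (\<forall>S. ph c' i = Looked S \<longrightarrow> FI ports c' i S)" using F by auto
    qed
    show "\<And>i. i < nr c' \<Longrightarrow> st (rob c' i) = Leader \<Longrightarrow> lead_ok ports c' i"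
    proof -
      fix i assume i: "i < nr c'" "st (rob c' i) = Leader"
      have iN: "i < n" using lt_n[OF i(1)] i(2) by simp
      have sL: "st (rob c i) = Leader" using stc[OF iN] i(2) by simp
      have L: "lead_ok ports c i" using binv_lead[OF I _ sL] iN n_def by simp
      show "lead_ok ports c' i"
      proof (cases "i = r")
        case True
        have "i \<noteq> 0 \<Longrightarrow> st (rob c' (i - 1)) = st (rob c (i - 1))" using stc iN by simp
        then show ?thesis using L True rA As pA unfolding lead_ok_def by auto
      next
        case False
        have fr: "st (rob c r) = Follower" using stR leader_unique[OF I _ rlt[unfolded n_def] sL] iN False n_def by auto
        show ?thesis
        proof (rule lead_ok_mono[OF L])
          show "rob c' i = rob c i" "ph c' i = ph c i" using rO[OF iN False] pO[OF iN False] by auto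
          show "i \<noteq> 0 \<Longrightarrow> st (rob c' (i - 1)) = st (rob c (i - 1))" using stc iN by simp
          show "\<And>t. Wt ports c t \<Longrightarrow> Wt ports c' t" using WK fr by blast
        qed
      qed
    qed
    show "\<And>p. Suc p < nr c' \<Longrightarrow> st (rob c' p) = Leader \<or> st (rob c' p) = Follower \<Longrightarrow> pair_ok ports door c' p"
    proof -
      fix p assume p: "Suc p < nr c'" "st (rob c' p) = Leader \<or> st (rob c' p) = Follower"
      have pN: "p < n" using lt_n[of p] p by auto
      have sp: "st (rob c p) = Leader \<or> st (rob c p) = Follower" using stc[OF pN] p(2) by simp
      show "pair_ok ports door c' p"
      proof (cases "p = r")
        case True
        have spA: "\<exists>s. sp (rob c' r) = Some s \<and> s < length (ports (pos (rob c' r)))" using rA As po by simp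
        have spv': "spv ports c' r = u" unfolding spv_def using rA As po by simp
        show ?thesis
        proof (cases "nr c' = n")
          case False
          then have nn: "nr c' = Suc n" using n' n_def by auto
          note dd = DD[OF nn]
          have ud: "u = door" using dd by blast
          have k0: "k = 0" using MF(2) pg_door(1)[OF pg] unfolding ud by simp
          have srn: "Suc r = n" using dd n1 by simp
          have "st (rob c' (Suc r)) = SNone" using srn dd by (simp add: new_robot_def)
          then have "snone_st ports door c' r"
            unfolding snone_st_def using ud rA As k0 spv' pA unfolding w_def notMoving_def
            by (simp add: new_robot_def)
          then show ?thesis unfolding True pair_ok_def using spA by blast
        next
          case nn: True
          have sr: "Suc r < n" using NN[OF nn] .
          note MP = moving_pair[OF I r sr[unfolded n_def]]
          have ri: "rob c' (Suc r) = rob c (Suc r)" "ph c' (Suc r) = ph c (Suc r)" using rO[OF sr] pO[OF sr] by auto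
          have pv: "ppv ports c' (Suc r) = u" using MP ri unfolding adj_def u_def ppv_def by simp
          have nmS: "notMoving c (Suc r)" using MP unfolding adj_def by simp
          have "gap ports c' r"
            unfolding gap_def Let_def pv
            using Eu[OF nn] spv' MP MF(2) ri pA rA As nmS unfolding notMoving_def w_def u_def by auto
          moreover have "fol_base ports c' (Suc r)" using MP ri unfolding fol_base_def by simp
          ultimately show ?thesis unfolding True pair_ok_def using spA by blast
        qed
      next
        case pr: False
        show ?thesis
        proof (cases "Suc p = r")
          case True
          have fr: "st (rob c r) = Follower"
          proof (rule ccontr)
            assume "st (rob c r) \<noteq> Follower"
            then have "st (rob c r) = Leader" using stR by simp
            then have "lead_ok ports c r" using binv_lead[OF I r(1)] by simp
            then have "st (rob c p) = Finished" using True unfolding lead_ok_def by auto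
            then show False using sp by simp
          qed
          note F = FOL[OF fr]
          obtain d where d: "rcd (rob c r) = Dir d" "d < length (ports w)" "ports w ! d = pos (rob c (r - 1))"
            "spv ports c (r - 1) = w" "notMoving c (r - 1)" "\<forall>S. ph c (r - 1) = Looked S \<longrightarrow> nconf S w"
            using FOL2[OF fr] by blast
          have pe: "p = r - 1" using True by simp
          have rp: "rob c' p = rob c p" "ph c' p = ph c p" using rO[OF pN pr] pO[OF pN pr] by auto
          have pvA: "ppv ports c' r = pos (rob c' p)" using ppvA(1)[OF fr] rp pe by simp
          have spvp: "spv ports c' p = pos (rob c' r)" using rp d(4) pe rA As unfolding spv_def by simp
          have "A0 ports c' p" unfolding A0_def True using rA As d(5,6) rp pe unfolding notMoving_def by auto
          then have "adj ports c' p" unfolding adj_def True using pvA spvp pA unfolding notMoving_def by simp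
          moreover have "fol_base ports c' (Suc p)" unfolding True fol_base_def using rA As fr ppvA(2,3)[OF fr] by auto
          moreover have "\<exists>s. sp (rob c' p) = Some s \<and> s < length (ports (pos (rob c' p)))"
            using F rp pe unfolding pair_ok_def by simp
          ultimately show ?thesis unfolding pair_ok_def by blast
        next
          case False
          have sN: "Suc p < n"
          proof (rule ccontr)
            assume "\<not> Suc p < n"
            then have "Suc p = n" "nr c' = Suc n" using p(1) n' pN n_def by auto
            then show False using DD pr by simp
          qed
          have P: "pair_ok ports door c p" using binv_pair[OF I _ sp] sN n_def by simp
          show ?thesis
          proof (rule pair_ok_cong4[OF P])
            show "rob c' p = rob c p" "ph c' p = ph c p" using rO[OF pN pr] pO[OF pN pr] by auto
            show "rob c' (Suc p) = rob c (Suc p)" "ph c' (Suc p) = ph c (Suc p)" using rO[OF sN False] pO[OF sN False] by auto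
          next
            assume g: "gap ports c p" and fb: "fol_base ports c (Suc p)"
            have ea: "empty_at c (ppv ports c (Suc p))" using g unfolding gap_def Let_def by simp
            have sf: "st (rob c (Suc p)) = Follower" using fb unfolding fol_base_def by simp
            have nw: "ppv ports c (Suc p) \<noteq> w"
            proof (cases "st (rob c r) = Leader")
              case True
              then show ?thesis using LEA sf sN unfolding Wt_def n_def by auto
            next
              case fl: False
              then have fr: "st (rob c r) = Follower" using stR by simp
              have "ppv ports c r = w" using FOL[OF fr] by simp
              then show ?thesis using binv_ppv[OF I, of "Suc p" r] sf fr sN rlt False unfolding n_def by auto
            qed
            have "nr c' = Suc n \<Longrightarrow> ppv ports c (Suc p) \<noteq> door"
              using ea DD rlt unfolding empty_at_def u_def n_def by auto
            then show "empty_at c' (ppv ports c (Suc p))" using Emp[OF ea nw] by blast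
          qed
        qed
      qed
    qed
    show "\<And>i j. i < nr c' \<Longrightarrow> j < nr c' \<Longrightarrow> st (rob c' i) = Follower \<Longrightarrow> st (rob c' j) = Follower \<Longrightarrow>
        ppv ports c' i = ppv ports c' j \<Longrightarrow> i = j"
    proof -
      fix i j assume ij: "i < nr c'" "j < nr c'" "st (rob c' i) = Follower" "st (rob c' j) = Follower"
        "ppv ports c' i = ppv ports c' j"
      have iN: "i < n" and jN: "j < n" using lt_n ij by auto
      have si: "st (rob c i) = Follower" "st (rob c j) = Follower" using stc iN jN ij by auto
      have pv: "x < n \<Longrightarrow> x \<noteq> r \<Longrightarrow> ppv ports c' x = ppv ports c x" for x using rO unfolding ppv_def by simp
      have oth: "x = r" if "x < n" "st (rob c x) = Follower" "ppv ports c x = pos (rob c (r - 1))" "st (rob c r) = Follower" for x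
      proof -
        have r0: "r \<noteq> 0" using FOL[OF that(4)] by simp
        have "r - 1 < nr c" using rlt n_def by simp
        then have "r - 1 = x - 1" using ppv_occ[OF I _ that(2) _ that(3)] that(1) n_def by simp
        moreover have "x \<noteq> 0" using binv_fol[OF I _ that(2)] that(1) n_def by simp
        ultimately show "x = r" using r0 by simp
      qed
      show "i = j"
      proof (cases "i = r \<or> j = r")
        case False
        then show ?thesis using binv_ppv[OF I, of i j] pv iN jN si ij(5) n_def by auto
      next
        case True
        have fr: "st (rob c r) = Follower" using True si by auto
        show ?thesis
        proof (cases "i = r")
          case ir: True
          show ?thesis
          proof (cases "j = r")
            case False
            have "ppv ports c j = pos (rob c (r - 1))" using ij(5) ir pv[OF jN False] ppvA(1)[OF fr] by simp
            then show ?thesis using oth[OF jN si(2) _ fr] ir by simp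
          qed (use ir in simp)
        next
          case False
          then have jr: "j = r" using True by simp
          have "ppv ports c i = pos (rob c (r - 1))" using ij(5) jr pv[OF iN False] ppvA(1)[OF fr] by simp
          then show ?thesis using oth[OF iN si(1) _ fr] jr by simp
        qed
      qed
    qed
  qed
qed


lemma astep_pres:
  assumes pg: "port_graph V ports door Delta" and I: "binv V ports door c" and st: "astep ports door c c'"
  shows "binv V ports door c'"
  using st
proof cases
  case (look i)
  then show ?thesis using look_pres[OF pg I] by simp
next
  case (comp i S r' mv)
  then show ?thesis using comp_pres[OF pg I] by simp
next
  case (move i k)
  show ?thesis
  proof (rule arrive_pres[OF pg I move(2) move(3)])
    show "nr c' = nr c \<or> nr c' = Suc (nr c)" using move(1) by simp
    show "\<And>j. j < nr c \<Longrightarrow> rob c' j = (if j = i then arrive ports (rob c i) k else rob c j)" using move(1) by simp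
    show "\<And>j. j < nr c \<Longrightarrow> ph c' j = (if j = i then Idle else ph c j)" using move(1) by simp
    show "nr c' = Suc (nr c) \<Longrightarrow> pos (rob c i) = door \<and> rob c' (nr c) = new_robot door \<and> ph c' (nr c) = Idle"
      using move(1) by simp
    show "nr c' = nr c \<Longrightarrow> pos (rob c i) \<noteq> door" using move(4) .
  qed
next
  case (move_door i k)
  show ?thesis
  proof (rule arrive_pres[OF pg I move_door(2) move_door(3)])
    show "nr c' = nr c \<or> nr c' = Suc (nr c)" using move_door(1) by simp
    show "\<And>j. j < nr c \<Longrightarrow> rob c' j = (if j = i then arrive ports (rob c i) k else rob c j)" using move_door(1) by simp
    show "\<And>j. j < nr c \<Longrightarrow> ph c' j = (if j = i then Idle else ph c j)" using move_door(1) by simp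
    show "nr c' = Suc (nr c) \<Longrightarrow> pos (rob c i) = door \<and> rob c' (nr c) = new_robot door \<and> ph c' (nr c) = Idle"
      using move_door(1,2,4) by simp
    show "nr c' = nr c \<Longrightarrow> pos (rob c i) \<noteq> door" using move_door(1) by simp
  qed
qed

theorem lemma6:
  fixes V :: "'v set" and ports :: "'v \<Rightarrow> 'v list" and door :: 'v and Delta :: nat
    and e :: "nat \<Rightarrow> 'v config"
  assumes "port_graph V ports door Delta"
    and "execution ports door e"
  shows "\<forall>t. card (leaders (e t)) \<le> 1"
proof
  fix t
  have "binv V ports door (e t)"
  proof (induction t)
    case 0
    then show ?case using init_binv[OF assms(1)] assms(2) unfolding execution_def by simp
  next
    case (Suc t)
    have "astep ports door (e t) (e (Suc t)) \<or> e (Suc t) = e t" using assms(2) unfolding execution_def by blast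
    then show ?case using astep_pres[OF assms(1) Suc.IH] Suc.IH by auto
  qed
  then show "card (leaders (e t)) \<le> 1" by (rule inv_leaders)
qed


end
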